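(* Let $k\geq 0$ and $t\geq 2$ be integers and let $T$ be a tournament with $n$ vertices and irregularity $i(T)\leq k$. If $n\geq 6t+5k-3$, then $\kappa_{w}^{*}(T)\geq t+1$; that is, $T$ is $\omega^{*}$-weakly connected for every $1\leq\omega\leq t+1$.
   Context: A tournament is a digraph in which each pair of distinct vertices is joined by exactly one arc. The irregularity $i(T)$ of a tournament $T$ is $\max_{x\in V(T)}|d^{+}(x)-d^{-}(x)|$, where $d^{+},d^{-}$ denote out- and in-degree. For distinct vertices $u,v$ of a digraph $D$, a weak $k^{*}$-container between $u$ and $v$ is a set of $k$ internally disjoint paths, each of which is either a $(u,v)$-path or a $(v,u)$-path (different paths may have different directions), whose union contains every vertex of $D$. $D$ is $k^{*}$-weakly connected if there is a weak $k^{*}$-container between every two distinct vertices of $D$. If $D$ is $1^{*}$-weakly connected, the weak spanning connectivity $\kappa_{w}^{*}(D)$ is the largest integer $k$ such that $D$ is $\omega^{*}$-weakly connected for all $1\leq\omega\leq k$. *)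

theory Defs
  imports Main
begin

definition tournament :: "'a set \<Rightarrow> ('a \<Rightarrow> 'a \<Rightarrow> bool) \<Rightarrow> bool" where
  "tournament V A \<longleftrightarrow> finite V
     \<and> (\<forall>x y. A x y \<longrightarrow> x \<in> V \<and> y \<in> V \<and> x \<noteq> y)
     \<and> (\<forall>x\<in>V. \<forall>y\<in>V. x \<noteq> y \<longrightarrow> (A x y \<longleftrightarrow> \<not> A y x))"

definition out_degree :: "'a set \<Rightarrow> ('a \<Rightarrow> 'a \<Rightarrow> bool) \<Rightarrow> 'a \<Rightarrow> nat" where
  "out_degree V A x = card {y \<in> V. A x y}"

definition in_degree :: "'a set \<Rightarrow> ('a \<Rightarrow> 'a \<Rightarrow> bool) \<Rightarrow> 'a \<Rightarrow> nat" where
  "in_degree V A x = card {y \<in> V. A y x}"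

definition irregularity :: "'a set \<Rightarrow> ('a \<Rightarrow> 'a \<Rightarrow> bool) \<Rightarrow> nat" where
  "irregularity V A = Max (insert 0
     ((\<lambda>x. nat \<bar>int (out_degree V A x) - int (in_degree V A x)\<bar>) ` V))"

definition is_path :: "'a set \<Rightarrow> ('a \<Rightarrow> 'a \<Rightarrow> bool) \<Rightarrow> 'a \<Rightarrow> 'a \<Rightarrow> 'a list \<Rightarrow> bool" where
  "is_path V A u v p \<longleftrightarrow> p \<noteq> [] \<and> hd p = u \<and> last p = v \<and> distinct p
     \<and> set p \<subseteq> V \<and> (\<forall>i. Suc i < length p \<longrightarrow> A (p ! i) (p ! Suc i))"

definition interior :: "'a list \<Rightarrow> 'a set" where
  "interior p = set (butlast (tl p))"

definition weak_container :: "'a set \<Rightarrow> ('a \<Rightarrow> 'a \<Rightarrow> bool) \<Rightarrow> nat \<Rightarrow> 'a \<Rightarrow> 'a \<Rightarrow> 'a list list \<Rightarrow> bool" where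
  "weak_container V A k u v Ps \<longleftrightarrow> length Ps = k \<and> distinct Ps
     \<and> (\<forall>p\<in>set Ps. is_path V A u v p \<or> is_path V A v u p)
     \<and> (\<forall>i<k. \<forall>j<k. i \<noteq> j \<longrightarrow> interior (Ps ! i) \<inter> interior (Ps ! j) = {})
     \<and> (\<Union>p\<in>set Ps. set p) = V"

definition weakly_connected_star :: "'a set \<Rightarrow> ('a \<Rightarrow> 'a \<Rightarrow> bool) \<Rightarrow> nat \<Rightarrow> bool" where
  "weakly_connected_star V A k \<longleftrightarrow>
     (\<forall>u\<in>V. \<forall>v\<in>V. u \<noteq> v \<longrightarrow> (\<exists>Ps. weak_container V A k u v Ps))"

end

theory Submission
  imports Defs
begin

lemma switch_split:
  assumes "\<exists>y\<in>set l. Q y"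
  shows "\<exists>l1 l2. l = l1 @ l2 \<and> l1 \<noteq> [] \<and> Q (last l1) \<and> (l2 = [] \<or> \<not> Q (hd l2))"
  using assms
proof (induction l)
  case Nil then show ?case by simp
next
  case (Cons y ys)
  show ?case
  proof (cases "\<exists>w\<in>set ys. Q w")
    case True
    from Cons.IH[OF True] obtain l1 l2 where "ys = l1 @ l2" "l1 \<noteq> []" "Q (last l1)" "l2 = [] \<or> \<not> Q (hd l2)" by blast
    then show ?thesis by (intro exI[of _ "y # l1"] exI[of _ l2]) auto
  next
    case False
    with Cons.prems have "Q y" by auto
    with False show ?thesis
      by (intro exI[of _ "[y]"] exI[of _ ys]) (cases ys, auto)
  qed
qed

lemma chain_insert:
  assumes "successively A (p1 @ p2)"
    and "\<exists>a\<in>set p1. A a z" and "\<exists>b\<in>set p2. A z b"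
    and "\<forall>w\<in>set (p1 @ p2). A w z \<or> A z w"
    and "\<forall>w\<in>set (p1 @ p2). \<not> (A w z \<and> A z w)"
  shows "\<exists>l1 l2. p1 @ p2 = l1 @ l2 \<and> l1 \<noteq> [] \<and> l2 \<noteq> [] \<and> successively A (l1 @ z # l2)"
  using assms
proof (induction p2 arbitrary: p1)
  case Nil then show ?case by simp
next
  case (Cons y ys)
  show ?case
  proof (cases "A z y")
    case True
    from switch_split[OF Cons.prems(2)] obtain l1 l2 where
      sp: "p1 = l1 @ l2" "l1 \<noteq> []" "A (last l1) z" "l2 = [] \<or> \<not> A (hd l2) z" by blast
    have hz: "A z (hd (l2 @ y # ys))"
    proof (cases "l2 = []")
      case True then show ?thesis using \<open>A z y\<close> by simp
    next
      case False
      then have "hd l2 \<in> set (p1 @ y # ys)" using sp by auto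
      with Cons.prems(4) sp False show ?thesis by auto
    qed
    have s: "successively A (l1 @ l2 @ y # ys)" using Cons.prems(1) sp by simp
    then have "successively A l1" "successively A (l2 @ y # ys)"
      by (auto simp: successively_append_iff)
    then have "successively A (l1 @ z # (l2 @ y # ys))"
      using sp hz by (auto simp: successively_append_iff successively_Cons)
    then show ?thesis using sp by (intro exI[of _ l1] exI[of _ "l2 @ y # ys"]) auto
  next
    case False
    then have "A y z" using Cons.prems(4) by auto
    obtain b where b: "b \<in> set (y # ys)" "A z b" using Cons.prems(3) by blast
    have "b \<noteq> y" using b False by auto
    then have "\<exists>b\<in>set ys. A z b" using b by auto
    moreover have "\<exists>a\<in>set (p1 @ [y]). A a z" using \<open>A y z\<close> by auto
    ultimately obtain l1 l2 where "(p1 @ [y]) @ ys = l1 @ l2" "l1 \<noteq> []" "l2 \<noteq> []" "successively A (l1 @ z # l2)"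
      using Cons.IH[of "p1 @ [y]"] Cons.prems(1,4,5) by auto
    then show ?thesis by auto
  qed
qed


locale tsetup =
  fixes V :: "'a set" and A :: "'a \<Rightarrow> 'a \<Rightarrow> bool" and k :: nat
  assumes tour: "tournament V A" and irr: "irregularity V A \<le> k"
    and big: "5 * k + 9 \<le> card V"
begin

lemma finV: "finite V" using tour unfolding tournament_def by blast
lemma arcV: "A x y \<Longrightarrow> x \<in> V \<and> y \<in> V \<and> x \<noteq> y" using tour unfolding tournament_def by blast
lemma tot: "x \<in> V \<Longrightarrow> y \<in> V \<Longrightarrow> x \<noteq> y \<Longrightarrow> A x y \<or> A y x"
  using tour unfolding tournament_def by blast
lemma asym: "A x y \<Longrightarrow> \<not> A y x"
proof -
  assume a: "A x y"
  then have "x \<in> V" "y \<in> V" "x \<noteq> y" using arcV by auto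
  then have "A x y \<longleftrightarrow> \<not> A y x" using tour unfolding tournament_def by blast
  then show ?thesis using a by blast
qed

abbreviation "od x \<equiv> out_degree V A x"
abbreviation "idg x \<equiv> in_degree V A x"

lemma deg_sum: assumes "x \<in> V" shows "od x + idg x = card V - 1"
proof -
  have "{y\<in>V. A x y} \<union> {y\<in>V. A y x} = V - {x}" using tot[OF assms] arcV by auto
  moreover have "{y\<in>V. A x y} \<inter> {y\<in>V. A y x} = {}" using asym by auto
  ultimately have "card {y\<in>V. A x y} + card {y\<in>V. A y x} = card (V - {x})"
    using card_Un_disjoint[of "{y\<in>V. A x y}" "{y\<in>V. A y x}"] finV by simp
  then show ?thesis using assms finV by (simp add: out_degree_def in_degree_def)
qed

lemma deg_diff: assumes "x \<in> V" shows "od x \<le> idg x + k" "idg x \<le> od x + k"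
proof -
  let ?f = "\<lambda>x. nat \<bar>int (out_degree V A x) - int (in_degree V A x)\<bar>"
  have "?f x \<le> Max (insert 0 (?f ` V))" using finV assms by (intro Max_ge) auto
  then have "?f x \<le> k" using irr unfolding irregularity_def by linarith
  then show "od x \<le> idg x + k" "idg x \<le> od x + k" by auto
qed

lemma od_lb: assumes "x \<in> V" shows "card V \<le> 2 * od x + 1 + k"
  using deg_sum[OF assms] deg_diff[OF assms] big by linarith
lemma id_lb: assumes "x \<in> V" shows "card V \<le> 2 * idg x + 1 + k"
  using deg_sum[OF assms] deg_diff[OF assms] big by linarith
lemma od_ub: assumes "x \<in> V" shows "2 * od x + 1 \<le> card V + k"
  using deg_sum[OF assms] deg_diff[OF assms] big by linarith
lemma id_ub: assumes "x \<in> V" shows "2 * idg x + 1 \<le> card V + k"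
  using deg_sum[OF assms] deg_diff[OF assms] big by linarith

lemma avg_aux:
  assumes S: "S \<subseteq> V"
  shows "2 * (\<Sum>x\<in>S. card {y\<in>S. A x y}) = card S * (card S - 1)"
proof -
  have fS: "finite S" using S finV finite_subset by blast
  have c: "card {y\<in>S. P y} = (\<Sum>y\<in>S. if P y then 1 else 0)" for P
    using fS by (simp add: sum.inter_filter[symmetric])
  have sw: "(\<Sum>x\<in>S. card {y\<in>S. A x y}) = (\<Sum>x\<in>S. card {y\<in>S. A y x})"
    unfolding c by (rule sum.swap)
  have each: "card {y\<in>S. A x y} + card {y\<in>S. A y x} = card S - 1" if "x \<in> S" for x
  proof -
    have "{y\<in>S. A x y} \<union> {y\<in>S. A y x} = S - {x}" using tot[of x] that S by (auto dest: arcV)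
    moreover have "{y\<in>S. A x y} \<inter> {y\<in>S. A y x} = {}" using asym by auto
    ultimately have "card {y\<in>S. A x y} + card {y\<in>S. A y x} = card (S - {x})"
      using card_Un_disjoint[of "{y\<in>S. A x y}" "{y\<in>S. A y x}"] fS by simp
    then show ?thesis using that fS by simp
  qed
  have h1: "(\<Sum>x\<in>S. card {y\<in>S. A x y}) + (\<Sum>x\<in>S. card {y\<in>S. A y x}) = (\<Sum>x\<in>S. card S - 1)"
    by (simp add: sum.distrib[symmetric] each)
  have h2: "(\<Sum>x\<in>S. card S - 1) = card S * (card S - 1)" by simp
  define X where "X = (\<Sum>x\<in>S. card {y\<in>S. A x y})"
  define Y where "Y = (\<Sum>x\<in>S. card {y\<in>S. A y x})"
  define W where "W = card S * (card S - 1)"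
  have "X + Y = W" "X = Y" using h1 h2 sw unfolding X_def Y_def W_def by auto
  then have "2 * X = W" by simp
  then show ?thesis using X_def W_def by simp
qed

lemma avg_aux_in:
  assumes S: "S \<subseteq> V"
  shows "2 * (\<Sum>x\<in>S. card {y\<in>S. A y x}) = card S * (card S - 1)"
proof -
  have fS: "finite S" using S finV finite_subset by blast
  have c: "card {y\<in>S. P y} = (\<Sum>y\<in>S. if P y then 1 else 0)" for P
    using fS by (simp add: sum.inter_filter[symmetric])
  have sw: "(\<Sum>x\<in>S. card {y\<in>S. A x y}) = (\<Sum>x\<in>S. card {y\<in>S. A y x})"
    unfolding c by (rule sum.swap)
  show ?thesis using avg_aux[OF S] sw by simp
qed

lemma avg_in:
  assumes "S \<subseteq> V" "S \<noteq> {}"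
  shows "\<exists>x\<in>S. 2 * card {y\<in>S. A y x} + 1 \<le> card S"
proof (rule ccontr)
  assume "\<not> ?thesis"
  then have "\<forall>x\<in>S. card S \<le> 2 * card {y\<in>S. A y x}" by auto
  then have "(\<Sum>x\<in>S. card S) \<le> (\<Sum>x\<in>S. 2 * card {y\<in>S. A y x})" by (intro sum_mono) auto
  also have "\<dots> = 2 * (\<Sum>x\<in>S. card {y\<in>S. A y x})" by (rule sum_distrib_left[symmetric])
  also have "\<dots> = card S * (card S - 1)" by (rule avg_aux_in[OF assms(1)])
  finally have le: "card S * card S \<le> card S * (card S - 1)" by simp
  have "finite S" using assms finV finite_subset by blast
  then have "card S > 0" using assms by auto
  with le have "card S \<le> card S - 1" by simp
  then show False using \<open>card S > 0\<close> by linarith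
qed

lemma avg_out:
  assumes "S \<subseteq> V" "S \<noteq> {}"
  shows "\<exists>x\<in>S. 2 * card {y\<in>S. A x y} + 1 \<le> card S"
proof (rule ccontr)
  assume "\<not> ?thesis"
  then have "\<forall>x\<in>S. card S \<le> 2 * card {y\<in>S. A x y}" by auto
  then have "(\<Sum>x\<in>S. card S) \<le> (\<Sum>x\<in>S. 2 * card {y\<in>S. A x y})" by (intro sum_mono) auto
  also have "\<dots> = 2 * (\<Sum>x\<in>S. card {y\<in>S. A x y})" by (rule sum_distrib_left[symmetric])
  also have "\<dots> = card S * (card S - 1)" by (rule avg_aux[OF assms(1)])
  finally have le: "card S * card S \<le> card S * (card S - 1)" by simp
  have "finite S" using assms finV finite_subset by blast
  then have "card S > 0" using assms by auto
  with le have "card S \<le> card S - 1" by simp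
  then show False using \<open>card S > 0\<close> by linarith
qed

end

lemma is_path_iff:
  "is_path V A a b p \<longleftrightarrow> p \<noteq> [] \<and> hd p = a \<and> last p = b \<and> distinct p \<and> set p \<subseteq> V \<and> successively A p"
  unfolding is_path_def successively_conv_nth by blast

lemma interior_eq:
  assumes "distinct p" "2 \<le> length p"
  shows "interior p = set p - {hd p, last p}"
proof -
  obtain x ys where p: "p = x # ys" using assms by (cases p) auto
  have ys: "ys \<noteq> []" using assms p by auto
  have "distinct ys" "x \<notin> set ys" using assms p by auto
  have d: "distinct (butlast ys @ [last ys])" using \<open>distinct ys\<close>
    by (simp only: append_butlast_last_id[OF ys])
  then have "last ys \<notin> set (butlast ys)" by simp
  moreover have "x \<notin> set (butlast ys)" using \<open>x \<notin> set ys\<close> in_set_butlastD by metis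
  moreover have "set ys = set (butlast ys @ [last ys])" by (simp only: append_butlast_last_id[OF ys])
  then have "set ys = insert (last ys) (set (butlast ys))" by simp
  ultimately show ?thesis unfolding interior_def using p ys by auto
qed

context tsetup begin

lemma path_insert:
  assumes "is_path V A a b p" "z \<in> V" "z \<notin> set p" "p = p1 @ p2"
    "\<exists>a'\<in>set p1. A a' z" "\<exists>b'\<in>set p2. A z b'"
  shows "\<exists>p'. is_path V A a b p' \<and> set p' = insert z (set p)"
proof -
  have sp: "successively A (p1 @ p2)" "distinct p" "set p \<subseteq> V" "hd p = a" "last p = b" "p \<noteq> []"
    using assms(1,4) by (auto simp: is_path_iff)
  have t1: "\<forall>w\<in>set (p1 @ p2). A w z \<or> A z w"
    using assms(2,3,4) sp(3) tot by auto
  have t2: "\<forall>w\<in>set (p1 @ p2). \<not> (A w z \<and> A z w)" using asym by blast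
  obtain l1 l2 where l: "p1 @ p2 = l1 @ l2" "l1 \<noteq> []" "l2 \<noteq> []" "successively A (l1 @ z # l2)"
    using chain_insert[OF sp(1) assms(5,6) t1 t2] by blast
  let ?p = "l1 @ z # l2"
  have "hd ?p = a" using l sp assms(4) by (simp add: hd_append)
  moreover have "last ?p = b" using l sp assms(4) by (simp add: last_append)
  moreover have "distinct ?p" using l sp assms(3,4) by auto
  moreover have "set ?p = insert z (set p)" using l assms(4) by auto
  moreover have "set ?p \<subseteq> V" using calculation(4) sp assms(2) by auto
  ultimately show ?thesis using l by (intro exI[of _ ?p]) (auto simp: is_path_iff)
qed

end

locale uvsetup = tsetup +
  fixes u v
  assumes uV: "u \<in> V" and vV: "v \<in> V" and uv: "u \<noteq> v" and Auv: "A u v"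
begin

definition "RR = V - {u, v}"
definition "PP = {x\<in>V. A u x \<and> A x v}"
definition "QQ = {x\<in>V. A v x \<and> A x u}"
definition "BB = {x\<in>V. A u x \<and> A v x}"
definition "CC = {x\<in>V. A x u \<and> A x v}"

definition "fp p \<longleftrightarrow> is_path V A u v p \<or> is_path V A v u p"
definition "cov Ps = (\<Union>j<length Ps. set (Ps ! j))"
definition "valid Ps \<longleftrightarrow> (\<forall>j<length Ps. fp (Ps ! j)) \<and> distinct Ps
   \<and> (\<forall>i<length Ps. \<forall>j<length Ps. i \<noteq> j \<longrightarrow> (set (Ps!i) - {u,v}) \<inter> (set (Ps!j) - {u,v}) = {})
   \<and> (\<exists>j<length Ps. is_path V A u v (Ps ! j)) \<and> (\<exists>j<length Ps. is_path V A v u (Ps ! j))"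

lemma cls: "x \<in> RR \<Longrightarrow> x \<in> PP \<or> x \<in> QQ \<or> x \<in> BB \<or> x \<in> CC"
  unfolding RR_def PP_def QQ_def BB_def CC_def using tot uV vV by blast

lemma fp_facts:
  assumes "fp p"
  shows "set p \<subseteq> V" "u \<in> set p" "v \<in> set p" "distinct p" "hd p \<in> {u,v}" "last p \<in> {u,v}"
    "hd p \<noteq> last p" "2 \<le> length p" "successively A p" "p \<noteq> []"
proof -
  have a: "p \<noteq> [] \<and> distinct p \<and> set p \<subseteq> V \<and> successively A p \<and>
     ((hd p = u \<and> last p = v) \<or> (hd p = v \<and> last p = u))"
    using assms unfolding fp_def is_path_iff by blast
  then show "set p \<subseteq> V" "distinct p" "hd p \<in> {u,v}" "last p \<in> {u,v}" "hd p \<noteq> last p"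
    "successively A p" "p \<noteq> []" using uv by auto
  show "u \<in> set p" "v \<in> set p" using a by (metis hd_in_set last_in_set)+
  show "2 \<le> length p"
  proof (rule ccontr)
    assume "\<not> 2 \<le> length p"
    moreover have "length p \<noteq> 0" using a by simp
    ultimately have "length p = 1" by linarith
    then obtain x where "p = [x]" by (metis One_nat_def length_0_conv length_Suc_conv)
    then show False using a uv by auto
  qed
qed

lemma fp_interior: "fp p \<Longrightarrow> interior p = set p - {u, v}"
  using interior_eq fp_facts by (metis insert_commute insertE singletonD)

lemma valid_fp: "valid Ps \<Longrightarrow> j < length Ps \<Longrightarrow> fp (Ps ! j)"
  unfolding valid_def by blast

lemma cov_sub: "valid Ps \<Longrightarrow> cov Ps \<subseteq> V"
  unfolding cov_def using valid_fp fp_facts(1) by blast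

lemma cov_uv: "valid Ps \<Longrightarrow> u \<in> cov Ps \<and> v \<in> cov Ps"
  unfolding valid_def cov_def using fp_facts(2,3) by blast

lemma upd:
  assumes val: "valid Ps" and i: "i < length Ps" and fpp: "fp p'"
    and hd: "hd p' = hd (Ps ! i)" and lst: "last p' = last (Ps ! i)"
    and st: "set p' = set (Ps ! i) \<union> N" and Ncov: "N \<inter> cov Ps = {}" and Nne: "N \<noteq> {}"
  shows "valid (Ps[i := p']) \<and> cov (Ps[i := p']) = cov Ps \<union> N \<and> length (Ps[i:=p']) = length Ps"
proof -
  let ?Q = "Ps[i := p']"
  have nth: "j < length Ps \<Longrightarrow> ?Q ! j = (if j = i then p' else Ps ! j)" for j
    using i by auto
  have Nj: "N \<inter> set (Ps ! j) = {}" if "j < length Ps" for j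
    using Ncov that unfolding cov_def by blast
  have notin: "p' \<notin> set Ps"
  proof
    assume "p' \<in> set Ps"
    then obtain j where "j < length Ps" "Ps ! j = p'" by (auto simp: in_set_conv_nth)
    then show False using Nj[of j] st Nne by auto
  qed
  have f1: "\<forall>j<length ?Q. fp (?Q ! j)" using val fpp nth unfolding valid_def by auto
  have f2: "distinct ?Q" using val notin by (intro distinct_list_update) (auto simp: valid_def)
  have f3: "\<forall>a<length ?Q. \<forall>b<length ?Q. a \<noteq> b \<longrightarrow> (set (?Q!a) - {u,v}) \<inter> (set (?Q!b) - {u,v}) = {}"
  proof (intro allI impI)
    fix a b assume ab: "a < length ?Q" "b < length ?Q" "a \<noteq> b"
    have d: "(set (Ps!a) - {u,v}) \<inter> (set (Ps!b) - {u,v}) = {}" using val ab unfolding valid_def by auto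
    show "(set (?Q!a) - {u,v}) \<inter> (set (?Q!b) - {u,v}) = {}"
      using d Nj[of a] Nj[of b] ab nth[of a] nth[of b] st by auto
  qed
  have htyp: "is_path V A x y p'" if "is_path V A x y (Ps ! i)" for x y
  proof -
    have "fp (Ps ! i)" using val i valid_fp by blast
    have "hd p' = x" "last p' = y" using that hd lst by (auto simp: is_path_iff)
    then show ?thesis using fpp uv unfolding fp_def is_path_iff by auto
  qed
  have f4: "\<exists>j<length ?Q. is_path V A u v (?Q ! j)"
  proof -
    obtain j where j: "j < length Ps" "is_path V A u v (Ps ! j)" using val unfolding valid_def by blast
    show ?thesis using j nth[of j] htyp by (intro exI[of _ j]) (auto split: if_splits)
  qed
  have f5: "\<exists>j<length ?Q. is_path V A v u (?Q ! j)"
  proof -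
    obtain j where j: "j < length Ps" "is_path V A v u (Ps ! j)" using val unfolding valid_def by blast
    show ?thesis using j nth[of j] htyp by (intro exI[of _ j]) (auto split: if_splits)
  qed
  have c: "cov ?Q = cov Ps \<union> N"
  proof
    show "cov ?Q \<subseteq> cov Ps \<union> N" unfolding cov_def using nth st by (auto split: if_splits)
    show "cov Ps \<union> N \<subseteq> cov ?Q"
    proof
      fix x assume "x \<in> cov Ps \<union> N"
      then consider (a) j where "j < length Ps" "x \<in> set (Ps ! j)" | (b) "x \<in> N" unfolding cov_def by blast
      then show "x \<in> cov ?Q"
      proof cases
        case a
        then have "x \<in> set (?Q ! j)" using nth[of j] st by (cases "j = i") auto
        moreover have "j < length ?Q" using a(1) by simp
        ultimately show ?thesis unfolding cov_def by blast
      next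
        case b
        then have "x \<in> set (?Q ! i)" using nth[of i] st i by auto
        moreover have "i < length ?Q" using i by simp
        ultimately show ?thesis unfolding cov_def by blast
      qed
    qed
  qed
  show ?thesis using f1 f2 f3 f4 f5 c unfolding valid_def by simp
qed

end

context uvsetup begin

definition "ext Ps \<longleftrightarrow> (\<exists>Ps'. valid Ps' \<and> length Ps' = length Ps \<and> cov Ps \<subset> cov Ps')"

lemma ext_gen:
  assumes val: "valid Ps" and i: "i < length Ps" and z: "z \<in> V" "z \<notin> cov Ps"
    and sp: "Ps ! i = p1 @ p2" and a: "\<exists>a\<in>set p1. A a z" and b: "\<exists>b\<in>set p2. A z b"
  shows "ext Ps"
proof -
  have f: "fp (Ps ! i)" using val i valid_fp by blast
  have zn: "z \<notin> set (Ps ! i)" using z i unfolding cov_def by blast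
  obtain x y where xy: "is_path V A x y (Ps ! i)" "fp' = fp'" using f unfolding fp_def by blast
  obtain p' where p': "is_path V A x y p'" "set p' = insert z (set (Ps ! i))"
    using path_insert[OF xy(1) z(1) zn sp a b] by blast
  have "fp p'" using p' xy f uv unfolding fp_def is_path_iff by auto
  moreover have "hd p' = hd (Ps ! i)" "last p' = last (Ps ! i)" using p' xy by (auto simp: is_path_iff)
  moreover have "set p' = set (Ps ! i) \<union> {z}" using p' by auto
  ultimately have "valid (Ps[i := p']) \<and> cov (Ps[i := p']) = cov Ps \<union> {z} \<and> length (Ps[i:=p']) = length Ps"
    using upd[OF val i] z by blast
  then show ?thesis unfolding ext_def using z by (intro exI[of _ "Ps[i := p']"]) auto
qed

lemma last_in_tl: "2 \<le> length p \<Longrightarrow> last p \<in> set (tl p)"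
  by (cases p) auto

lemma ext_P:
  assumes val: "valid Ps" and z: "z \<in> PP" "z \<notin> cov Ps"
  shows "ext Ps"
proof -
  obtain j where j: "j < length Ps" "is_path V A u v (Ps ! j)" using val unfolding valid_def by blast
  have f: "fp (Ps ! j)" using val j valid_fp by blast
  have e: "Ps ! j = [hd (Ps ! j)] @ tl (Ps ! j)" using fp_facts(10)[OF f] by simp
  have "hd (Ps ! j) = u" "last (Ps ! j) = v" using j by (auto simp: is_path_iff)
  moreover have "last (Ps ! j) \<in> set (tl (Ps ! j))" using fp_facts(8)[OF f] last_in_tl by blast
  ultimately show ?thesis using z unfolding PP_def
    by (intro ext_gen[OF val j(1) _ z(2) e]) auto
qed

lemma ext_Q:
  assumes val: "valid Ps" and z: "z \<in> QQ" "z \<notin> cov Ps"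
  shows "ext Ps"
proof -
  obtain j where j: "j < length Ps" "is_path V A v u (Ps ! j)" using val unfolding valid_def by blast
  have f: "fp (Ps ! j)" using val j valid_fp by blast
  have e: "Ps ! j = [hd (Ps ! j)] @ tl (Ps ! j)" using fp_facts(10)[OF f] by simp
  have "hd (Ps ! j) = v" "last (Ps ! j) = u" using j by (auto simp: is_path_iff)
  moreover have "last (Ps ! j) \<in> set (tl (Ps ! j))" using fp_facts(8)[OF f] last_in_tl by blast
  ultimately show ?thesis using z unfolding QQ_def
    by (intro ext_gen[OF val j(1) _ z(2) e]) auto
qed

lemma ext_B:
  assumes val: "valid Ps" and z: "z \<in> BB" "z \<notin> cov Ps" and i: "i < length Ps"
    and w: "w \<in> set (Ps ! i) - {u, v}" "A z w"
  shows "ext Ps"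
proof -
  have f: "fp (Ps ! i)" using val i valid_fp by blast
  obtain ys zs where e: "Ps ! i = ys @ w # zs" using w split_list[of w "Ps ! i"] by blast
  have "ys \<noteq> []" using e fp_facts(5)[OF f] w by auto
  then have "hd (Ps ! i) \<in> set ys" using e by simp
  moreover have "A (hd (Ps ! i)) z" using fp_facts(5)[OF f] z unfolding BB_def by auto
  ultimately show ?thesis
    using z w unfolding BB_def by (intro ext_gen[OF val i _ z(2) e]) auto
qed

lemma ext_C:
  assumes val: "valid Ps" and z: "z \<in> CC" "z \<notin> cov Ps" and i: "i < length Ps"
    and w: "w \<in> set (Ps ! i) - {u, v}" "A w z"
  shows "ext Ps"
proof -
  have f: "fp (Ps ! i)" using val i valid_fp by blast
  obtain ys zs where e: "Ps ! i = ys @ w # zs" using w split_list[of w "Ps ! i"] by blast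
  then have e2: "Ps ! i = (ys @ [w]) @ zs" by simp
  have "zs \<noteq> []" using e fp_facts(6)[OF f] w by auto
  then have "last (Ps ! i) \<in> set zs" using e by simp
  moreover have "A z (last (Ps ! i))" using fp_facts(6)[OF f] z unfolding CC_def by auto
  ultimately show ?thesis
    using z w unfolding CC_def by (intro ext_gen[OF val i _ z(2) e2]) auto
qed

lemma ext_pair:
  assumes val: "valid Ps" and x: "x \<in> BB" "x \<notin> cov Ps" and y: "y \<in> CC" "y \<notin> cov Ps"
    and xy: "A x y" and i: "i < length Ps"
    and wx: "\<forall>w\<in>set (Ps ! i) - {u, v}. A w x" and wy: "\<forall>w\<in>set (Ps ! i) - {u, v}. A y w"
  shows "ext Ps"
proof -
  let ?p = "Ps ! i"
  have f: "fp ?p" using val i valid_fp by blast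
  let ?q = "butlast ?p"
  have ne: "?p \<noteq> []" using fp_facts(10)[OF f] .
  have pq: "?q @ [last ?p] = ?p" using append_butlast_last_id[OF ne] .
  have qne: "?q \<noteq> []" using fp_facts(8)[OF f] by (cases ?p) auto
  have dq: "distinct (?q @ [last ?p])" using fp_facts(4)[OF f] by (simp only: pq)
  have lq0: "last ?q \<in> set ?q" using qne by simp
  have lq: "last ?q \<in> set ?p" "last ?q \<noteq> last ?p"
    using in_set_butlastD[OF lq0] apply simp
    using lq0 dq by auto
  have "A (last ?q) x"
  proof (cases "last ?q \<in> {u, v}")
    case True then show ?thesis using x unfolding BB_def by auto
  next
    case False then show ?thesis using wx lq by auto
  qed
  have yl: "A y (last ?p)" using fp_facts(6)[OF f] y unfolding CC_def by auto
  let ?p' = "?q @ [x, y, last ?p]"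
  have xyV: "x \<in> V" "y \<in> V" using x y unfolding BB_def CC_def by auto
  have xn: "x \<notin> set ?p" "y \<notin> set ?p" using x y i unfolding cov_def by auto
  have xney: "x \<noteq> y" using xy arcV by blast
  have "successively A (?q @ [last ?p])" using fp_facts(9)[OF f] by (simp only: pq)
  then have sq: "successively A ?q" by (simp add: successively_append_iff)
  have s': "successively A ?p'" using sq \<open>A (last ?q) x\<close> xy yl qne
    by (auto simp: successively_append_iff)
  have d': "distinct ?p'" using dq xn xney last_in_set[OF ne] by (auto dest: in_set_butlastD)
  have "hd (?q @ [last ?p]) = hd ?q" using qne by simp
  then have hd': "hd ?p' = hd ?p" using qne by (simp only: pq) simp
  have "set (?q @ [last ?p]) = set ?q \<union> {last ?p}" by simp
  then have "set ?p = set ?q \<union> {last ?p}" by (simp only: pq)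
  then have set': "set ?p' = set ?p \<union> {x, y}" by auto
  have V': "set ?p' \<subseteq> V" using set' fp_facts(1)[OF f] xyV by auto
  have fp': "fp ?p'" using f s' d' hd' V' unfolding fp_def is_path_iff by auto
  have "valid (Ps[i := ?p']) \<and> cov (Ps[i := ?p']) = cov Ps \<union> {x, y} \<and> length (Ps[i:=?p']) = length Ps"
    using upd[OF val i fp' hd' _ set'] x y by auto
  then show ?thesis unfolding ext_def using x by (intro exI[of _ "Ps[i := ?p']"]) auto
qed

end

context uvsetup begin

lemma BB_card: "2 * card BB + 3 \<le> card V + k"
proof -
  have vin: "v \<in> {y\<in>V. A u y}" using Auv vV by auto
  have fin: "finite {y\<in>V. A u y}" using finV by auto
  have "BB \<subseteq> {y\<in>V. A u y} - {v}" unfolding BB_def using arcV by auto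
  then have "card BB \<le> card ({y\<in>V. A u y} - {v})" using fin by (intro card_mono) auto
  also have "\<dots> = card {y\<in>V. A u y} - 1" using card_Diff_singleton[OF vin] .
  finally have "card BB \<le> od u - 1" unfolding out_degree_def .
  moreover have "1 \<le> od u" unfolding out_degree_def using vin fin
    by (metis One_nat_def Suc_leI card_gt_0_iff empty_iff)
  ultimately show ?thesis using od_ub[OF uV] by linarith
qed

lemma CC_card: "2 * card CC + 1 \<le> card V + k"
proof -
  have "CC \<subseteq> {y\<in>V. A y u}" unfolding CC_def by auto
  then have "card CC \<le> idg u" using finV unfolding in_degree_def by (intro card_mono) auto
  then show ?thesis using id_ub[OF uV] by linarith
qed

lemma step:
  assumes val: "valid Ps" and ne: "cov Ps \<noteq> V"
  shows "ext Ps"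
proof (rule ccontr)
  assume H: "\<not> ext Ps"
  define Z where "Z = V - cov Ps"
  have ZR: "Z \<subseteq> RR" using cov_uv[OF val] unfolding Z_def RR_def by auto
  have Zne: "Z \<noteq> {}" using ne cov_sub[OF val] unfolding Z_def by auto
  have Zc: "z \<in> Z \<Longrightarrow> z \<notin> cov Ps" for z unfolding Z_def by auto
  have a: "Z \<inter> PP = {}" using ext_P[OF val] H Zc by blast
  have b: "Z \<inter> QQ = {}" using ext_Q[OF val] H Zc by blast
  have c: "\<not> A z w" if "z \<in> Z \<inter> BB" "i < length Ps" "w \<in> set (Ps ! i) - {u,v}" for z i w
    using ext_B[OF val _ _ that(2,3)] H Zc that(1) by blast
  have d: "\<not> A w z" if "z \<in> Z \<inter> CC" "i < length Ps" "w \<in> set (Ps ! i) - {u,v}" for z i w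
    using ext_C[OF val _ _ that(2,3)] H Zc that(1) by blast
  have len: "0 < length Ps" using val unfolding valid_def by auto
  have e: "\<not> A x y" if "x \<in> Z \<inter> BB" "y \<in> Z \<inter> CC" for x y
  proof
    assume xy: "A x y"
    have f: "fp (Ps ! 0)" using val len valid_fp by blast
    have wx: "\<forall>w\<in>set (Ps ! 0) - {u, v}. A w x"
    proof
      fix w assume w: "w \<in> set (Ps ! 0) - {u, v}"
      have "w \<noteq> x" using w Zc[of x] that len unfolding cov_def by auto
      moreover have "w \<in> V" "x \<in> V" using w fp_facts(1)[OF f] that Z_def by auto
      ultimately show "A w x" using tot c[OF that(1) len w] by blast
    qed
    have wy: "\<forall>w\<in>set (Ps ! 0) - {u, v}. A y w"
    proof
      fix w assume w: "w \<in> set (Ps ! 0) - {u, v}"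
      have "w \<noteq> y" using w Zc[of y] that len unfolding cov_def by auto
      moreover have "w \<in> V" "y \<in> V" using w fp_facts(1)[OF f] that Z_def by auto
      ultimately show "A y w" using tot d[OF that(2) len w] by blast
    qed
    show False using ext_pair[OF val _ _ _ _ xy len wx wy] H Zc that by blast
  qed
  have finZ: "finite Z" using finV Z_def by auto
  show False
  proof (cases "Z \<inter> BB = {}")
    case False
    let ?S = "Z \<inter> BB"
    obtain x where x: "x \<in> ?S" "2 * card {y\<in>?S. A x y} + 1 \<le> card ?S"
      using avg_out[of ?S] False Z_def by auto
    have sub: "{y\<in>V. A x y} \<subseteq> {y\<in>?S. A x y}"
    proof
      fix y assume y: "y \<in> {y\<in>V. A x y}"
      have "y \<noteq> u" "y \<noteq> v" using y x asym unfolding BB_def by auto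
      have "y \<notin> cov Ps"
      proof
        assume "y \<in> cov Ps"
        then obtain i where "i < length Ps" "y \<in> set (Ps ! i)" unfolding cov_def by auto
        then show False using c[OF x(1)] y \<open>y \<noteq> u\<close> \<open>y \<noteq> v\<close> by auto
      qed
      then have yZ: "y \<in> Z" using y Z_def by auto
      then have "y \<in> BB" using cls[of y] ZR a b e[of x y] x y by auto
      then show "y \<in> {y\<in>?S. A x y}" using yZ y by auto
    qed
    have "od x \<le> card {y\<in>?S. A x y}" unfolding out_degree_def using sub finZ by (intro card_mono) auto
    moreover have "card ?S \<le> card BB" using finV unfolding BB_def by (intro card_mono) auto
    moreover have "x \<in> V" using x Z_def by auto
    ultimately show False using od_lb[of x] BB_card x(2) big by linarith
  next
    case True
    then have ZC: "Z \<subseteq> CC" using ZR a b cls by blast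
    obtain x where x: "x \<in> Z" "2 * card {y\<in>Z. A y x} + 1 \<le> card Z"
      using avg_in[of Z] Zne Z_def by auto
    have sub: "{y\<in>V. A y x} \<subseteq> {y\<in>Z. A y x}"
    proof
      fix y assume y: "y \<in> {y\<in>V. A y x}"
      have "x \<in> CC" using x ZC by auto
      then have "y \<noteq> u" "y \<noteq> v" using y asym unfolding CC_def by auto
      have "y \<notin> cov Ps"
      proof
        assume "y \<in> cov Ps"
        then obtain i where "i < length Ps" "y \<in> set (Ps ! i)" unfolding cov_def by auto
        then show False using d[of x i y] x ZC y \<open>y \<noteq> u\<close> \<open>y \<noteq> v\<close> by auto
      qed
      then show "y \<in> {y\<in>Z. A y x}" using y Z_def by auto
    qed
    have "idg x \<le> card {y\<in>Z. A y x}" unfolding in_degree_def using sub finZ by (intro card_mono) auto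
    moreover have "card Z \<le> card CC" using finV ZC unfolding CC_def by (intro card_mono) auto
    moreover have "x \<in> V" using x Z_def by auto
    ultimately show False using id_lb[of x] CC_card x(2) big by linarith
  qed
qed

lemma absorb:
  assumes "valid Ps"
  shows "\<exists>Ps'. valid Ps' \<and> length Ps' = length Ps \<and> cov Ps' = V"
  using assms
proof (induction "card (V - cov Ps)" arbitrary: Ps rule: less_induct)
  case less
  show ?case
  proof (cases "cov Ps = V")
    case True then show ?thesis using less.prems by blast
  next
    case False
    obtain Ps' where P': "valid Ps'" "length Ps' = length Ps" "cov Ps \<subset> cov Ps'"
      using step[OF less.prems False] unfolding ext_def by blast
    have "V - cov Ps' \<subset> V - cov Ps" using P'(3) cov_sub[OF P'(1)] by blast
    then have "card (V - cov Ps') < card (V - cov Ps)" using finV by (intro psubset_card_mono) auto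
    from less.hyps[OF this P'(1)] P'(2) show ?thesis by auto
  qed
qed

end

context uvsetup begin

lemma RR_card: "card RR = card V - 2"
  unfolding RR_def using uV vV uv finV by (simp add: card_Diff_subset)

lemma RR_split: "RR = BB \<union> CC \<union> PP \<union> QQ"
  using cls unfolding RR_def BB_def CC_def PP_def QQ_def using asym uv arcV by auto

lemma BC_disj: "BB \<inter> CC = {}" unfolding BB_def CC_def using asym by auto

lemma cut_lemma:
  assumes W: "W \<subseteq> RR" "PP \<union> QQ \<subseteq> W" and noarc: "\<forall>x\<in>BB - W. \<forall>y\<in>CC - W. \<not> A x y"
  shows "card V + 2 \<le> 3 * card W + 2 * k \<or> card V \<le> 2 * card W + k + 3"
proof -
  have finW: "finite W" using W finV unfolding RR_def by (auto intro: finite_subset)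
  have RW: "RR - W = (BB - W) \<union> (CC - W)" using RR_split W by auto
  have cRW: "card (RR - W) = card V - 2 - card W"
    using W(1) RR_card finW by (simp add: card_Diff_subset)
  have finB: "finite (BB - W)" "finite (CC - W)" using finV unfolding BB_def CC_def by auto
  have cBC: "card (BB - W) + card (CC - W) = card V - 2 - card W"
  proof -
    have "(BB - W) \<inter> (CC - W) = {}" using BC_disj by auto
    then have "card ((BB - W) \<union> (CC - W)) = card (BB - W) + card (CC - W)"
      using card_Un_disjoint[OF finB] by blast
    then show ?thesis using cRW RW by simp
  qed
  have V2: "card V \<ge> 2" using big by linarith
  show ?thesis
  proof (cases "BB - W = {}")
    case True
    then have "RR - W \<subseteq> CC" using RW by auto
    then have "card (RR - W) \<le> card CC" using finV unfolding CC_def by (intro card_mono) auto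
    then show ?thesis using cRW CC_card by linarith
  next
    case Bne: False
    show ?thesis
    proof (cases "CC - W = {}")
      case True
      then have "RR - W \<subseteq> BB" using RW by auto
      then have "card (RR - W) \<le> card BB" using finV unfolding BB_def by (intro card_mono) auto
      then show ?thesis using cRW BB_card by linarith
    next
      case Cne: False
      obtain x where x: "x \<in> BB - W" "2 * card {y\<in>BB - W. A x y} + 1 \<le> card (BB - W)"
        using avg_out[of "BB - W"] Bne unfolding BB_def by auto
      obtain y where y: "y \<in> CC - W" "2 * card {z\<in>CC - W. A z y} + 1 \<le> card (CC - W)"
        using avg_in[of "CC - W"] Cne unfolding CC_def by auto
      have sx: "{z\<in>V. A x z} \<subseteq> {z\<in>BB - W. A x z} \<union> W"
      proof
        fix z assume z: "z \<in> {z\<in>V. A x z}"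
        have "z \<noteq> u" "z \<noteq> v" using x z asym unfolding BB_def by auto
        then have "z \<in> RR" using z unfolding RR_def by auto
        moreover have "z \<notin> CC - W" using noarc x z by auto
        ultimately show "z \<in> {z\<in>BB - W. A x z} \<union> W" using RR_split W z by auto
      qed
      have sy: "{z\<in>V. A z y} \<subseteq> {z\<in>CC - W. A z y} \<union> W"
      proof
        fix z assume z: "z \<in> {z\<in>V. A z y}"
        have "z \<noteq> u" "z \<noteq> v" using y z asym unfolding CC_def by auto
        then have "z \<in> RR" using z unfolding RR_def by auto
        moreover have "z \<notin> BB - W" using noarc y z by auto
        ultimately show "z \<in> {z\<in>CC - W. A z y} \<union> W" using RR_split W z by auto
      qed
      have "od x \<le> card ({z\<in>BB - W. A x z} \<union> W)" unfolding out_degree_def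
        using sx finB finW by (intro card_mono) auto
      also have "\<dots> \<le> card {z\<in>BB - W. A x z} + card W" by (rule card_Un_le)
      finally have ox: "od x \<le> card {z\<in>BB - W. A x z} + card W" .
      have "idg y \<le> card ({z\<in>CC - W. A z y} \<union> W)" unfolding in_degree_def
        using sy finB finW by (intro card_mono) auto
      also have "\<dots> \<le> card {z\<in>CC - W. A z y} + card W" by (rule card_Un_le)
      finally have iy: "idg y \<le> card {z\<in>CC - W. A z y} + card W" .
      have "x \<in> V" "y \<in> V" using x y unfolding BB_def CC_def by auto
      then show ?thesis using od_lb[of x] id_lb[of y] ox iy x(2) y(2) cBC V2 by linarith
    qed
  qed
qed

lemma PQ_card: "card PP + 1 \<le> card QQ + k"
proof -
  have fin: "finite BB" "finite PP" "finite QQ" "finite {v}" using finV unfolding BB_def PP_def QQ_def by auto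
  have s1: "{v} \<union> BB \<union> PP \<subseteq> {y\<in>V. A u y}" using Auv vV unfolding BB_def PP_def by auto
  have d1: "card ({v} \<union> BB \<union> PP) = 1 + card BB + card PP"
  proof -
    have "v \<notin> BB" "v \<notin> PP" "BB \<inter> PP = {}" unfolding BB_def PP_def using asym Auv by auto
    then show ?thesis using fin by (simp add: card_Un_disjoint)
  qed
  have "card ({v} \<union> BB \<union> PP) \<le> od u" unfolding out_degree_def using s1 finV by (intro card_mono) auto
  then have ou: "1 + card BB + card PP \<le> od u" using d1 by simp
  have s2: "{y\<in>V. A v y} \<subseteq> BB \<union> QQ"
  proof
    fix y assume y: "y \<in> {y\<in>V. A v y}"
    then have "y \<noteq> u" "y \<noteq> v" using Auv asym arcV by auto
    then show "y \<in> BB \<union> QQ" using y tot[of u y] uV unfolding BB_def QQ_def by auto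
  qed
  have "od v \<le> card (BB \<union> QQ)" unfolding out_degree_def using s2 fin by (intro card_mono) auto
  also have "\<dots> \<le> card BB + card QQ" by (rule card_Un_le)
  finally have ov: "od v \<le> card BB + card QQ" .
  show ?thesis using ou ov od_ub[OF uV] od_lb[OF vV] by linarith
qed

lemma app_valid:
  assumes val: "valid Ps" and fpp: "fp p" and ne: "set p - {u,v} \<noteq> {}"
    and dj: "(set p - {u,v}) \<inter> cov Ps = {}"
  shows "valid (Ps @ [p]) \<and> cov (Ps @ [p]) = cov Ps \<union> set p"
proof -
  let ?Q = "Ps @ [p]"
  have nth: "j < length ?Q \<Longrightarrow> ?Q ! j = (if j = length Ps then p else Ps ! j)" for j
    by (auto simp: nth_append)
  have dj2: "(set p - {u,v}) \<inter> set (Ps ! j) = {}" if "j < length Ps" for j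
    using dj that unfolding cov_def by blast
  have notin: "p \<notin> set Ps"
  proof
    assume "p \<in> set Ps"
    then obtain j where "j < length Ps" "Ps ! j = p" by (auto simp: in_set_conv_nth)
    then show False using dj2[of j] ne by auto
  qed
  have f1: "\<forall>j<length ?Q. fp (?Q ! j)" using val fpp nth unfolding valid_def by auto
  have f2: "distinct ?Q" using val notin unfolding valid_def by auto
  have f3: "\<forall>a<length ?Q. \<forall>b<length ?Q. a \<noteq> b \<longrightarrow> (set (?Q!a) - {u,v}) \<inter> (set (?Q!b) - {u,v}) = {}"
  proof (intro allI impI)
    fix a b assume ab: "a < length ?Q" "b < length ?Q" "a \<noteq> b"
    show "(set (?Q!a) - {u,v}) \<inter> (set (?Q!b) - {u,v}) = {}"
    proof (cases "a = length Ps \<or> b = length Ps")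
      case True then show ?thesis using ab nth[of a] nth[of b] dj2[of a] dj2[of b] by auto
    next
      case False
      then have "a < length Ps" "b < length Ps" using ab by auto
      then show ?thesis using val ab nth[of a] nth[of b] unfolding valid_def by auto
    qed
  qed
  have f4: "\<exists>j<length ?Q. is_path V A u v (?Q ! j)"
    using val unfolding valid_def by (auto simp: nth_append)
  have f5: "\<exists>j<length ?Q. is_path V A v u (?Q ! j)"
    using val unfolding valid_def by (auto simp: nth_append)
  have c: "cov ?Q = cov Ps \<union> set p"
  proof
    show "cov ?Q \<subseteq> cov Ps \<union> set p"
    proof
      fix x assume "x \<in> cov ?Q"
      then obtain j where j: "j < length ?Q" "x \<in> set (?Q ! j)" unfolding cov_def by blast
      show "x \<in> cov Ps \<union> set p"
      proof (cases "j = length Ps")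
        case True then show ?thesis using j nth by auto
      next
        case False
        then have "j < length Ps" "x \<in> set (Ps ! j)" using j nth[of j] by auto
        then show ?thesis unfolding cov_def by blast
      qed
    qed
    show "cov Ps \<union> set p \<subseteq> cov ?Q"
    proof
      fix x assume "x \<in> cov Ps \<union> set p"
      then consider (a) j where "j < length Ps" "x \<in> set (Ps ! j)" | (b) "x \<in> set p" unfolding cov_def by blast
      then show "x \<in> cov ?Q"
      proof cases
        case a
        then have "x \<in> set (?Q ! j)" by (simp add: nth_append)
        moreover have "j < length ?Q" using a(1) by simp
        ultimately show ?thesis unfolding cov_def by blast
      next
        case b
        then have "x \<in> set (?Q ! length Ps)" by simp
        moreover have "length Ps < length ?Q" by simp
        ultimately show ?thesis unfolding cov_def by blast
      qed
    qed
  qed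
  show ?thesis using f1 f2 f3 f4 f5 c unfolding valid_def by simp
qed

lemma fp_uzv: "z \<in> PP \<Longrightarrow> fp [u, z, v]"
  unfolding fp_def is_path_iff PP_def using uV vV uv arcV by auto
lemma fp_vzu: "z \<in> QQ \<Longrightarrow> fp [v, z, u]"
  unfolding fp_def is_path_iff QQ_def using uV vV uv arcV by auto
lemma fp_vxyu: "x \<in> BB \<Longrightarrow> y \<in> CC \<Longrightarrow> A x y \<Longrightarrow> fp [v, x, y, u]"
  unfolding fp_def is_path_iff BB_def CC_def using uV vV uv arcV by auto
lemma fp_vxyu': "x \<in> BB \<Longrightarrow> y \<in> CC \<Longrightarrow> A x y \<Longrightarrow> is_path V A v u [v, x, y, u]"
  unfolding is_path_iff BB_def CC_def using uV vV uv arcV by auto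
lemma fp_vzu': "z \<in> QQ \<Longrightarrow> is_path V A v u [v, z, u]"
  unfolding is_path_iff QQ_def using uV vV uv arcV by auto
lemma fp_uv: "fp [u, v]" "is_path V A u v [u, v]"
  unfolding fp_def is_path_iff using uV vV uv Auv by auto

lemma RR_mem: "x \<in> PP \<or> x \<in> QQ \<or> x \<in> BB \<or> x \<in> CC \<Longrightarrow> x \<noteq> u \<and> x \<noteq> v"
  unfolding PP_def QQ_def BB_def CC_def using asym Auv arcV by auto

lemma base_valid:
  assumes "is_path V A v u p" "set p - {u,v} \<noteq> {}"
  shows "valid [[u,v], p] \<and> cov [[u,v], p] = set p"
proof -
  have fpp: "fp p" using assms unfolding fp_def by auto
  have "[u,v] \<noteq> p" using assms(2) by auto
  moreover have "\<forall>j<2. fp ([[u, v], p] ! j)" using fp_uv fpp by (auto simp: less_2_cases_iff)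
  moreover have "\<exists>j<2. is_path V A u v ([[u, v], p] ! j)" using fp_uv by (intro exI[of _ 0]) auto
  moreover have "\<exists>j<2. is_path V A v u ([[u, v], p] ! j)" using assms by (intro exI[of _ 1]) auto
  moreover have "\<forall>i<2. \<forall>j<2. i \<noteq> j \<longrightarrow> (set ([[u, v], p] ! i) - {u,v}) \<inter> (set ([[u, v], p] ! j) - {u,v}) = {}"
    by (auto simp: less_2_cases_iff)
  ultimately have "valid [[u,v], p]" unfolding valid_def by (simp add: numeral_2_eq_2)
  moreover have "cov [[u,v], p] = set p" unfolding cov_def using fp_facts(2,3)[OF fpp]
    by (auto simp: less_2_cases_iff numeral_2_eq_2 lessThan_Suc)
  ultimately show ?thesis by blast
qed

end

context uvsetup begin

lemma valid_container:
  assumes "valid Ps" "cov Ps = V"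
  shows "weak_container V A (length Ps) u v Ps"
proof -
  have a: "\<forall>p\<in>set Ps. is_path V A u v p \<or> is_path V A v u p"
  proof
    fix p assume "p \<in> set Ps"
    then obtain j where "j < length Ps" "p = Ps ! j" by (auto simp: in_set_conv_nth)
    then show "is_path V A u v p \<or> is_path V A v u p" using valid_fp[OF assms(1)] unfolding fp_def by blast
  qed
  have b: "\<forall>i<length Ps. \<forall>j<length Ps. i \<noteq> j \<longrightarrow> interior (Ps ! i) \<inter> interior (Ps ! j) = {}"
    using assms(1) fp_interior valid_fp unfolding valid_def by simp
  have e: "set Ps = (\<lambda>j. Ps ! j) ` {..<length Ps}" by (auto simp: in_set_conv_nth image_def)
  have c: "(\<Union>p\<in>set Ps. set p) = cov Ps" unfolding cov_def e by simp
  show ?thesis unfolding weak_container_def using a b c assms unfolding valid_def by simp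
qed

end

locale mainl = uvsetup +
  fixes t :: nat
  assumes t2: "2 \<le> t" and bigt: "6 * t + 5 * k - 3 \<le> card V"
begin

lemma init:
  assumes "1 \<le> s" "s \<le> t"
  shows "\<exists>Ps. valid Ps \<and> length Ps = s + 1 \<and> card (cov Ps - {u,v}) \<le> 2 * s"
  using assms
proof (induction s)
  case 0 then show ?case by simp
next
  case (Suc s)
  show ?case
  proof (cases "s = 0")
    case True
    have "\<exists>p. is_path V A v u p \<and> set p - {u,v} \<noteq> {} \<and> card (set p - {u,v}) \<le> 2"
    proof (cases "QQ = {}")
      case False
      then obtain z where z: "z \<in> QQ" by auto
      then have "set [v,z,u] - {u,v} = {z}" using RR_mem by auto
      then show ?thesis using fp_vzu'[OF z] by (intro exI[of _ "[v,z,u]"]) auto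
    next
      case Qe: True
      show ?thesis
      proof (cases "\<exists>x\<in>BB. \<exists>y\<in>CC. A x y")
        case True
        then obtain x y where xy: "x \<in> BB" "y \<in> CC" "A x y" by blast
        then have "set [v,x,y,u] - {u,v} = {x,y}" using RR_mem by auto
        moreover have "card {x,y} \<le> 2" by (simp add: card_insert_le_m1)
        ultimately show ?thesis using fp_vxyu'[OF xy] by (intro exI[of _ "[v,x,y,u]"]) auto
      next
        case False
        have "PP \<subseteq> RR" using RR_split by auto
        moreover have "\<forall>x\<in>BB - PP. \<forall>y\<in>CC - PP. \<not> A x y" using False by blast
        ultimately have "card V + 2 \<le> 3 * card PP + 2 * k \<or> card V \<le> 2 * card PP + k + 3"
          using cut_lemma[of PP] Qe by auto
        then have False using PQ_card Qe big by (elim disjE) auto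
        then show ?thesis by blast
      qed
    qed
    then obtain p where p: "is_path V A v u p" "set p - {u,v} \<noteq> {}" "card (set p - {u,v}) \<le> 2" by blast
    from base_valid[OF p(1,2)] p True show ?thesis by (intro exI[of _ "[[u,v], p]"]) auto
  next
    case False
    obtain Ps where Ps: "valid Ps" "length Ps = s + 1" "card (cov Ps - {u,v}) \<le> 2 * s"
      using Suc False by auto
    define W where "W = cov Ps - {u,v}"
    have WR: "W \<subseteq> RR" using cov_sub[OF Ps(1)] unfolding W_def RR_def by auto
    have finW: "finite W" using WR finV unfolding RR_def by (auto intro: finite_subset)
    have new: "\<exists>p. fp p \<and> set p - {u,v} \<noteq> {} \<and> (set p - {u,v}) \<inter> W = {} \<and> card (set p - {u,v}) \<le> 2"
    proof (cases "PP - W \<noteq> {}")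
      case True
      then obtain z where z: "z \<in> PP" "z \<notin> W" by auto
      then have "set [u,z,v] - {u,v} = {z}" using RR_mem by auto
      then show ?thesis using fp_uzv[OF z(1)] z by (intro exI[of _ "[u,z,v]"]) auto
    next
      case F1: False
      show ?thesis
      proof (cases "QQ - W \<noteq> {}")
        case True
        then obtain z where z: "z \<in> QQ" "z \<notin> W" by auto
        then have "set [v,z,u] - {u,v} = {z}" using RR_mem by auto
        then show ?thesis using fp_vzu[OF z(1)] z by (intro exI[of _ "[v,z,u]"]) auto
      next
        case F2: False
        show ?thesis
        proof (cases "\<exists>x\<in>BB - W. \<exists>y\<in>CC - W. A x y")
          case True
          then obtain x y where xy: "x \<in> BB" "y \<in> CC" "A x y" "x \<notin> W" "y \<notin> W" by blast
          then have "set [v,x,y,u] - {u,v} = {x,y}" using RR_mem by auto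
          moreover have "card {x,y} \<le> 2" by (simp add: card_insert_le_m1)
          ultimately show ?thesis using fp_vxyu[OF xy(1-3)] xy by (intro exI[of _ "[v,x,y,u]"]) auto
        next
          case False
          have "PP \<union> QQ \<subseteq> W" using F1 F2 by auto
          then have "card V + 2 \<le> 3 * card W + 2 * k \<or> card V \<le> 2 * card W + k + 3"
            using cut_lemma[OF WR] False by blast
          moreover have "card W \<le> 2 * s" using Ps(3) W_def by simp
          ultimately have False using Suc.prems bigt t2 by (elim disjE) linarith+
          then show ?thesis by blast
        qed
      qed
    qed
    then obtain p where p: "fp p" "set p - {u,v} \<noteq> {}" "(set p - {u,v}) \<inter> W = {}" "card (set p - {u,v}) \<le> 2"
      by blast
    have dj: "(set p - {u,v}) \<inter> cov Ps = {}" using p(3) W_def by auto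
    have v2: "valid (Ps @ [p]) \<and> cov (Ps @ [p]) = cov Ps \<union> set p" using app_valid[OF Ps(1) p(1,2) dj] .
    have "cov (Ps @ [p]) - {u,v} = W \<union> (set p - {u,v})" using v2 W_def by auto
    then have "card (cov (Ps @ [p]) - {u,v}) \<le> card W + card (set p - {u,v})"
      by (simp add: card_Un_le)
    then have "card (cov (Ps @ [p]) - {u,v}) \<le> 2 * Suc s" using Ps(3) p(4) W_def by simp
    then show ?thesis using v2 Ps(2) by (intro exI[of _ "Ps @ [p]"]) auto
  qed
qed

lemma main_ge2:
  assumes "2 \<le> w" "w \<le> t + 1"
  shows "\<exists>Ps. weak_container V A w u v Ps"
proof -
  have "1 \<le> w - 1" "w - 1 \<le> t" using assms by auto
  then obtain Ps where Ps: "valid Ps" "length Ps = (w - 1) + 1"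
    using init[of "w - 1"] by blast
  obtain Ps' where "valid Ps'" "length Ps' = length Ps" "cov Ps' = V" using absorb[OF Ps(1)] by blast
  then show ?thesis using valid_container Ps(2) assms by (intro exI[of _ Ps']) fastforce
qed

end

context uvsetup begin

definition "cyc c \<longleftrightarrow> distinct c \<and> 3 \<le> length c \<and> set c \<subseteq> RR \<and> successively A c \<and> A (last c) (hd c)"

lemma cyc_rot1: assumes "cyc c" shows "cyc (rotate1 c)"
proof -
  obtain x xs where c: "c = x # xs" using assms unfolding cyc_def by (cases c) auto
  have xs: "xs \<noteq> []" using assms c unfolding cyc_def by auto
  have s: "successively A (x # xs)" "A (last (x # xs)) x" using assms c unfolding cyc_def by auto
  then have "successively A xs" "A x (hd xs)" using xs by (auto simp: successively_Cons)
  moreover have "A (last xs) x" using s xs by simp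
  ultimately have "successively A (xs @ [x])" using xs by (simp add: successively_append_iff)
  moreover have "A (last (xs @ [x])) (hd (xs @ [x]))" using \<open>A x (hd xs)\<close> xs by simp
  ultimately show ?thesis using assms c unfolding cyc_def by auto
qed

lemma cyc_rot: "cyc c \<Longrightarrow> cyc (rotate n c)"
  by (induction n) (auto intro: cyc_rot1)

lemma SL:
  assumes S: "S \<subseteq> RR" "S \<noteq> {}" and S': "S' \<subseteq> RR" "S' \<noteq> {}" and un: "S \<union> S' = RR"
    and dj: "S \<inter> S' = {}" and no: "\<forall>a\<in>S'. \<forall>b\<in>S. \<not> A a b"
  shows False
proof -
  have finR: "finite RR" using finV unfolding RR_def by auto
  have fin: "finite S" "finite S'" using S S' finR finite_subset by auto
  have RV: "RR \<subseteq> V" unfolding RR_def by auto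
  obtain x where x: "x \<in> S'" "2 * card {y\<in>S'. A x y} + 1 \<le> card S'"
    using avg_out[of S'] S' RV by auto
  obtain y where y: "y \<in> S" "2 * card {z\<in>S. A z y} + 1 \<le> card S"
    using avg_in[of S] S RV by auto
  have "{z\<in>V. A x z} \<subseteq> {z\<in>S'. A x z} \<union> {u, v}"
    using no x un unfolding RR_def by blast
  then have "od x \<le> card ({z\<in>S'. A x z} \<union> {u, v})" unfolding out_degree_def
    using fin by (intro card_mono) auto
  also have "\<dots> \<le> card {z\<in>S'. A x z} + card {u,v}" by (rule card_Un_le)
  also have "\<dots> \<le> card {z\<in>S'. A x z} + 2" by (simp add: card_insert_if)
  finally have ox: "od x \<le> card {z\<in>S'. A x z} + 2" .
  have "{z\<in>V. A z y} \<subseteq> {z\<in>S. A z y} \<union> {u, v}"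
    using no y un unfolding RR_def by blast
  then have "idg y \<le> card ({z\<in>S. A z y} \<union> {u, v})" unfolding in_degree_def
    using fin by (intro card_mono) auto
  also have "\<dots> \<le> card {z\<in>S. A z y} + card {u,v}" by (rule card_Un_le)
  also have "\<dots> \<le> card {z\<in>S. A z y} + 2" by (simp add: card_insert_if)
  finally have iy: "idg y \<le> card {z\<in>S. A z y} + 2" .
  have "card S + card S' = card RR" using card_Un_disjoint[OF fin dj] un by simp
  then have cs: "card S + card S' = card V - 2" using RR_card by simp
  have "x \<in> V" "y \<in> V" using x y S S' RV by auto
  then show False using od_lb[of x] id_lb[of y] ox iy x(2) y(2) cs big by linarith
qed

lemma RR_sub: "RR \<subseteq> V" unfolding RR_def by auto
lemma finRR: "finite RR" using finV unfolding RR_def by auto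

lemma RR_ne: "RR \<noteq> {}" using RR_card big by auto

lemma cyc3: "\<exists>c. cyc c"
proof -
  obtain x where x: "x \<in> RR" using RR_ne by auto
  define N where "N = {y\<in>RR. A x y}"
  define M where "M = {y\<in>RR. A y x}"
  show ?thesis
  proof (cases "\<exists>y\<in>N. \<exists>z\<in>M. A y z")
    case True
    then obtain y z where yz: "y \<in> N" "z \<in> M" "A y z" by blast
    have "distinct [x,y,z]" using yz arcV unfolding N_def M_def by auto
    then have "cyc [x,y,z]" unfolding cyc_def using yz x unfolding N_def M_def by auto
    then show ?thesis by blast
  next
    case False
    have xV: "x \<in> V" using x RR_sub by auto
    have "{y\<in>V. A x y} \<subseteq> N \<union> {u,v}" unfolding N_def RR_def by auto
    then have "od x \<le> card (N \<union> {u,v})" unfolding out_degree_def using finRR N_def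
      by (intro card_mono) auto
    also have "\<dots> \<le> card N + card {u,v}" by (rule card_Un_le)
    also have "\<dots> \<le> card N + 2" using uv by simp
    finally have "card N \<noteq> 0" using od_lb[OF xV] big by linarith
    then have Nne: "N \<noteq> {}" by auto
    show ?thesis
    proof (rule ccontr)
      show False
      proof (rule SL[of "insert x M" N])
        show "insert x M \<subseteq> RR" "N \<subseteq> RR" using x unfolding M_def N_def by auto
        show "insert x M \<noteq> {}" "N \<noteq> {}" using Nne by auto
        show "insert x M \<union> N = RR" using x tot RR_sub unfolding M_def N_def by blast
        show "insert x M \<inter> N = {}" unfolding M_def N_def using asym arcV by blast
        show "\<forall>a\<in>N. \<forall>b\<in>insert x M. \<not> A a b" using False asym unfolding N_def M_def by blast
      qed
    qed
  qed
qed

lemma cyc_len: "cyc c \<Longrightarrow> length c \<le> card RR"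
  unfolding cyc_def using finRR by (metis card_mono distinct_card)

lemma cyc_insert:
  assumes c: "cyc c" and z: "z \<in> RR" "z \<notin> set c" and a: "a \<in> set c" "A a z" and b: "b \<in> set c" "A z b"
  shows "\<exists>c'. cyc c' \<and> length c' = Suc (length c)"
proof -
  obtain j where j: "j < length c" "c ! j = b" using b by (auto simp: in_set_conv_nth)
  define l where "l = rotate j c"
  have cl: "cyc l" using cyc_rot c l_def by blast
  have ne: "c \<noteq> []" using c unfolding cyc_def by auto
  have hl: "hd l = b" using hd_rotate_conv_nth[OF ne, of j] j l_def by simp
  have sl: "set l = set c" using l_def by simp
  obtain l1 l2 where sp: "l = l1 @ l2" "l1 \<noteq> []" "A (last l1) z" "l2 = [] \<or> \<not> A (hd l2) z"
    using switch_split[of l "\<lambda>w. A w z"] a sl by blast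
  have s1: "successively A l1" "successively A l2" using cl sp unfolding cyc_def
    by (auto simp: successively_append_iff)
  have zV: "z \<in> V" using z RR_sub by auto
  have "set l \<subseteq> V" using cl RR_sub unfolding cyc_def by auto
  have zh: "A z (hd l2)" if "l2 \<noteq> []"
  proof -
    have "hd l2 \<in> set l" using sp that by auto
    then have "hd l2 \<noteq> z" "hd l2 \<in> V" using z sl \<open>set l \<subseteq> V\<close> by auto
    then show ?thesis using sp(4) that tot zV by blast
  qed
  let ?c = "l1 @ z # l2"
  have "successively A ?c" using s1 sp zh by (cases "l2 = []") (auto simp: successively_append_iff successively_Cons)
  moreover have "A (last ?c) (hd ?c)"
  proof (cases "l2 = []")
    case True then show ?thesis using hl sp b by simp
  next
    case False
    have "A (last l) (hd l)" using cl unfolding cyc_def by auto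
    then show ?thesis using False sp by simp
  qed
  moreover have "distinct ?c" using cl sp z sl unfolding cyc_def by auto
  moreover have "set ?c \<subseteq> RR" using cl sp z unfolding cyc_def by auto
  moreover have ll: "length l = length c" using l_def by simp
  then have "length ?c = Suc (length c)" using sp by simp
  ultimately show ?thesis using cl ll unfolding cyc_def by (intro exI[of _ ?c]) auto
qed

lemma cyc_replace:
  assumes c: "cyc c" and ov: "ov \<in> RR" "ov \<notin> set c" "\<forall>y\<in>set c. A y ov"
    and i: "i \<in> RR" "i \<notin> set c" "\<forall>y\<in>set c. A i y" and oi: "A ov i"
  shows "\<exists>c'. cyc c' \<and> length c' = Suc (length c)"
proof -
  obtain c0 c1 c2 rest where e: "c = c0 # c1 # c2 # rest" using c unfolding cyc_def
    by (metis Suc_le_length_iff numeral_3_eq_3)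
  let ?c = "c0 # ov # i # c2 # rest"
  have "successively A (c2 # rest)" using c e unfolding cyc_def by simp
  moreover have "A c0 ov" "A i c2" using ov i e by auto
  ultimately have "successively A ?c" using oi by simp
  moreover have "A (last ?c) (hd ?c)" using c e unfolding cyc_def by simp
  moreover have "ov \<noteq> i" using oi arcV by blast
  then have "distinct ?c" using c e ov i unfolding cyc_def by auto
  moreover have "set ?c \<subseteq> RR" using c e ov i unfolding cyc_def by auto
  ultimately show ?thesis using e unfolding cyc_def by (intro exI[of _ ?c]) auto
qed

lemma ham_cycle: "\<exists>c. cyc c \<and> set c = RR"
proof -
  obtain c0 where "cyc c0" using cyc3 by blast
  have P0: "\<exists>c. cyc c \<and> length c = length c0" using \<open>cyc c0\<close> by blast
  have Pb: "\<forall>y. (\<exists>c. cyc c \<and> length c = y) \<longrightarrow> y \<le> card RR" using cyc_len by blast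
  obtain m where m: "\<exists>c. cyc c \<and> length c = m" "\<forall>m'. (\<exists>c. cyc c \<and> length c = m') \<longrightarrow> m' \<le> m"
    using Nat.ex_has_greatest_nat[where P="\<lambda>m. \<exists>c. cyc c \<and> length c = m", OF P0 Pb] by blast
  then obtain c where c: "cyc c" "length c = m" by blast
  have maxc: "\<not> (\<exists>c'. cyc c' \<and> length c' = Suc (length c))" using m c by fastforce
  show ?thesis
  proof (rule ccontr)
    assume "\<not> ?thesis"
    then have out: "set c \<noteq> RR" using c by blast
    have cR: "set c \<subseteq> RR" using c unfolding cyc_def by auto
    have cne: "set c \<noteq> {}" using c unfolding cyc_def by auto
    define Ost where "Ost = {z\<in>RR - set c. \<forall>y\<in>set c. A y z}"
    define Ist where "Ist = {z\<in>RR - set c. \<forall>y\<in>set c. A z y}"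
    have cover: "RR - set c \<subseteq> Ost \<union> Ist"
    proof
      fix z assume z: "z \<in> RR - set c"
      have zc: "z \<notin> set c" "z \<in> RR" using z by auto
      have "(\<forall>y\<in>set c. A y z) \<or> (\<forall>y\<in>set c. A z y)"
      proof (rule ccontr)
        assume "\<not> ((\<forall>y\<in>set c. A y z) \<or> (\<forall>y\<in>set c. A z y))"
        then obtain a b where ab: "a \<in> set c" "\<not> A a z" "b \<in> set c" "\<not> A z b" by auto
        have "a \<noteq> z" "b \<noteq> z" using ab zc by auto
        moreover have "a \<in> V" "b \<in> V" "z \<in> V" using ab zc cR RR_sub by auto
        ultimately have "A z a" "A b z" using tot[of z a] tot[of b z] ab by auto
        from cyc_insert[OF c(1) zc(2) zc(1) ab(3) this(2) ab(1) this(1)] maxc show False by blast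
      qed
      then show "z \<in> Ost \<union> Ist" using zc unfolding Ost_def Ist_def by auto
    qed
    define y0 where "y0 = hd c"
    have y0: "y0 \<in> set c" using c unfolding cyc_def y0_def by (cases c) auto
    have OI: "Ost \<inter> Ist = {}"
    proof (rule ccontr)
      assume "Ost \<inter> Ist \<noteq> {}"
      then obtain z where "z \<in> Ost" "z \<in> Ist" by auto
      then have "A y0 z" "A z y0" using y0 unfolding Ost_def Ist_def by auto
      then show False using asym by blast
    qed
    have noOI: "\<forall>a\<in>Ost. \<forall>b\<in>Ist. \<not> A a b"
    proof (intro ballI notI)
      fix a b assume ab: "a \<in> Ost" "b \<in> Ist" "A a b"
      have "a \<in> RR" "a \<notin> set c" "\<forall>y\<in>set c. A y a" using ab(1) unfolding Ost_def by auto
      moreover have "b \<in> RR" "b \<notin> set c" "\<forall>y\<in>set c. A b y" using ab(2) unfolding Ist_def by auto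
      ultimately have "\<exists>c'. cyc c' \<and> length c' = Suc (length c)"
        using cyc_replace[OF c(1)] ab(3) by blast
      then show False using maxc by blast
    qed
    show False
    proof (cases "Ost = {}")
      case False
      show False
      proof (rule SL[of "set c \<union> Ist" Ost])
        show "set c \<union> Ist \<subseteq> RR" "Ost \<subseteq> RR" using cR unfolding Ist_def Ost_def by auto
        show "set c \<union> Ist \<noteq> {}" "Ost \<noteq> {}" using cne False by auto
        show "set c \<union> Ist \<union> Ost = RR" using cover cR unfolding Ist_def Ost_def by auto
        show "(set c \<union> Ist) \<inter> Ost = {}" using OI unfolding Ost_def by auto
        show "\<forall>a\<in>Ost. \<forall>b\<in>set c \<union> Ist. \<not> A a b" using noOI asym unfolding Ost_def by blast
      qed
    next
      case True
      then have Ine: "Ist \<noteq> {}" using cover out cR by auto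
      show False
      proof (rule SL[of Ist "set c"])
        show "Ist \<subseteq> RR" "set c \<subseteq> RR" using cR unfolding Ist_def by auto
        show "Ist \<noteq> {}" "set c \<noteq> {}" using cne Ine by auto
        show "Ist \<union> set c = RR" using cover cR True unfolding Ist_def by auto
        show "Ist \<inter> set c = {}" unfolding Ist_def by auto
        show "\<forall>a\<in>set c. \<forall>b\<in>Ist. \<not> A a b" using asym unfolding Ist_def by blast
      qed
    qed
  qed
qed

end

lemma no_split_succ:
  assumes "\<forall>l1 l2. c = l1 @ l2 \<longrightarrow> l1 \<noteq> [] \<longrightarrow> l2 \<noteq> [] \<longrightarrow> F (last l1) (hd l2)"
  shows "successively F c"
  using assms
proof (induction c)
  case Nil then show ?case by simp
next
  case (Cons a rest)
  show ?case
  proof (cases rest)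
    case Nil then show ?thesis by simp
  next
    case (Cons b r)
    have "F a b" using Cons.prems[rule_format, of "[a]" rest] Cons by simp
    moreover have "successively F rest"
    proof (rule Cons.IH, intro allI impI)
      fix l1 l2 assume "rest = l1 @ l2" "l1 \<noteq> []" "l2 \<noteq> []"
      then show "F (last l1) (hd l2)" using Cons.prems[rule_format, of "a # l1" l2] by simp
    qed
    ultimately show ?thesis using Cons by simp
  qed
qed

lemma prop_last:
  assumes "successively F l" "\<forall>a b. a \<in> set l \<longrightarrow> b \<in> set l \<longrightarrow> F a b \<longrightarrow> a \<in> S \<longrightarrow> b \<in> S"
    "x \<in> set l" "x \<in> S"
  shows "last l \<in> S"
  using assms
proof (induction l arbitrary: x)
  case Nil then show ?case by simp
next
  case (Cons a rest)
  show ?case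
  proof (cases rest)
    case Nil then show ?thesis using Cons.prems by simp
  next
    case (Cons b r)
    have sr: "successively F rest" "F a b" using Cons.prems(1) Cons by auto
    have pr: "\<forall>a b. a \<in> set rest \<longrightarrow> b \<in> set rest \<longrightarrow> F a b \<longrightarrow> a \<in> S \<longrightarrow> b \<in> S"
      using Cons.prems(2) by auto
    have "\<exists>y\<in>set rest. y \<in> S"
    proof (cases "x = a")
      case True
      then have "b \<in> S" using Cons.prems(2,4) sr(2) Cons by auto
      then show ?thesis using Cons by auto
    next
      case False then show ?thesis using Cons.prems(3,4) by auto
    qed
    then obtain y where "y \<in> set rest" "y \<in> S" by blast
    then have "last rest \<in> S" using Cons.IH[OF sr(1) pr] by blast
    then show ?thesis using Cons by simp
  qed
qed

lemma prop_all:
  assumes "successively F l" "\<forall>a b. a \<in> set l \<longrightarrow> b \<in> set l \<longrightarrow> F a b \<longrightarrow> a \<in> S \<longrightarrow> b \<in> S"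
    "l \<noteq> []" "hd l \<in> S"
  shows "set l \<subseteq> S"
  using assms
proof (induction l)
  case Nil then show ?case by simp
next
  case (Cons a rest)
  show ?case
  proof (cases rest)
    case Nil then show ?thesis using Cons.prems by simp
  next
    case (Cons b r)
    have sr: "successively F rest" "F a b" using Cons.prems(1) Cons by auto
    have pr: "\<forall>a b. a \<in> set rest \<longrightarrow> b \<in> set rest \<longrightarrow> F a b \<longrightarrow> a \<in> S \<longrightarrow> b \<in> S"
      using Cons.prems(2) by auto
    have "b \<in> S" using Cons.prems(2,4) sr(2) Cons by auto
    then have "set rest \<subseteq> S" using Cons.IH[OF sr(1) pr] Cons by simp
    then show ?thesis using Cons.prems(4) by simp
  qed
qed

lemma succ_last2:
  assumes "successively F l" "2 \<le> length l"
  shows "F (last (butlast l)) (last l)"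
proof -
  have ne: "l \<noteq> []" using assms by auto
  have "butlast l \<noteq> []" using assms by (cases l) auto
  moreover have "successively F (butlast l @ [last l])" using assms(1) append_butlast_last_id[OF ne] by simp
  ultimately show ?thesis by (simp add: successively_append_iff)
qed

context uvsetup begin

definition "good a b \<longleftrightarrow> (a \<in> CC \<union> PP \<and> b \<in> BB \<union> PP) \<or> (a \<in> CC \<union> QQ \<and> b \<in> BB \<union> QQ)"
definition "hampath l \<longleftrightarrow> l \<noteq> [] \<and> distinct l \<and> set l = RR \<and> successively A l"
definition "HAM \<longleftrightarrow> (\<exists>p. (is_path V A u v p \<or> is_path V A v u p) \<and> set p = V)"

lemma full_path:
  assumes h: "hampath l" and ab: "a \<in> V" "b \<in> V" "{a, b} = {u, v}" "a \<noteq> b"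
    and s: "A a (hd l)" "A (last l) b"
  shows "is_path V A a b (a # l @ [b]) \<and> set (a # l @ [b]) = V"
proof -
  have sl: "set l = V - {a, b}" using h ab(3) unfolding hampath_def RR_def by simp
  have lne: "l \<noteq> []" "successively A l" using h unfolding hampath_def by auto
  have s1: "successively A (l @ [b])" using lne s by (simp add: successively_append_iff)
  have "hd (l @ [b]) = hd l" using lne by simp
  then have "successively A (a # (l @ [b]))" using s1 s unfolding successively_Cons by simp
  moreover have "a \<notin> set l" "b \<notin> set l" using sl by auto
  then have "distinct (a # l @ [b])" using h ab(4) unfolding hampath_def by simp
  moreover have "set (a # l @ [b]) = V" using sl ab(1,2) by auto
  ultimately show ?thesis unfolding is_path_iff by auto
qed

lemma from_good:
  assumes h: "hampath l" and g: "good (last l) (hd l)"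
  shows HAM
proof -
  show ?thesis
  proof (cases "last l \<in> CC \<union> PP \<and> hd l \<in> BB \<union> PP")
    case True
    then have "A u (hd l)" "A (last l) v" unfolding CC_def PP_def BB_def by auto
    then show ?thesis using full_path[OF h uV vV _ uv] unfolding HAM_def by blast
  next
    case False
    then have "last l \<in> CC \<union> QQ \<and> hd l \<in> BB \<union> QQ" using g unfolding good_def by blast
    then have "A v (hd l)" "A (last l) u" unfolding CC_def QQ_def BB_def by auto
    then show ?thesis using full_path[OF h vV uV _ uv[symmetric]] unfolding HAM_def by blast
  qed
qed

lemma same_class:
  assumes h: "hampath l" and c: "(hd l \<in> PP \<and> last l \<in> PP) \<or> (hd l \<in> QQ \<and> last l \<in> QQ)"
  shows HAM
  using from_good[OF h] c unfolding good_def by blast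

end

lemma cyc_prop:
  assumes "successively F c" "F (last c) (hd c)" "c \<noteq> []"
    "\<forall>a b. a \<in> set c \<longrightarrow> b \<in> set c \<longrightarrow> F a b \<longrightarrow> a \<in> S \<longrightarrow> b \<in> S"
    "x \<in> set c" "x \<in> S"
  shows "set c \<subseteq> S"
proof -
  have "last c \<in> S" using prop_last[OF assms(1,4,5,6)] .
  moreover have "last c \<in> set c" "hd c \<in> set c" using assms(3) by auto
  ultimately have "hd c \<in> S" using assms(2,4) by blast
  then show ?thesis using prop_all[OF assms(1,4,3)] by blast
qed

context uvsetup begin

lemma PQ_disj: "PP \<inter> QQ = {}" unfolding PP_def QQ_def using asym by auto
lemma BP_disj: "BB \<inter> PP = {}" unfolding PP_def BB_def using asym by auto
lemma BQ_disj: "BB \<inter> QQ = {}" unfolding QQ_def BB_def using asym by auto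
lemma CP_disj: "CC \<inter> PP = {}" unfolding PP_def CC_def using asym by auto
lemma CQ_disj: "CC \<inter> QQ = {}" unfolding QQ_def CC_def using asym by auto
lemma classes_RR: "BB \<subseteq> RR" "CC \<subseteq> RR" "PP \<subseteq> RR" "QQ \<subseteq> RR" using RR_split by auto

lemma not_RR_CC: "\<not> RR \<subseteq> CC"
proof
  assume a: "RR \<subseteq> CC"
  have "{y\<in>V. A u y} \<subseteq> {v}"
  proof
    fix y assume y: "y \<in> {y\<in>V. A u y}"
    show "y \<in> {v}"
    proof (rule ccontr)
      assume "y \<notin> {v}"
      then have "y \<in> RR" using y arcV unfolding RR_def by auto
      then have "A y u" using a unfolding CC_def by auto
      then show False using y asym by auto
    qed
  qed
  then have "od u \<le> 1" unfolding out_degree_def by (metis card.empty card.insert card_mono finite.intros(1,2) empty_iff One_nat_def)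
  then show False using od_lb[OF uV] big by linarith
qed

lemma not_RR_BB: "\<not> RR \<subseteq> BB"
proof
  assume a: "RR \<subseteq> BB"
  have "{y\<in>V. A y u} = {}"
  proof (rule ccontr)
    assume "{y\<in>V. A y u} \<noteq> {}"
    then obtain y where y: "y \<in> V" "A y u" by blast
    have "y \<noteq> u" "y \<noteq> v" using y arcV Auv asym by auto
    then have "y \<in> BB" using a y unfolding RR_def by auto
    then show False using y asym unfolding BB_def by auto
  qed
  then have "idg u = 0" unfolding in_degree_def by (simp only: card.empty)
  then show False using id_lb[OF uV] big by linarith
qed

lemma ham_split:
  assumes c: "cyc c" "set c = RR" and sp: "c = l1 @ l2" "l1 \<noteq> []" "l2 \<noteq> []" and g: "good (last l1) (hd l2)"
  shows HAM
proof -
  have cf: "distinct c" "successively A c" "A (last c) (hd c)" using c unfolding cyc_def by auto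
  have "successively A l1" "successively A l2" using cf(2) sp by (auto simp: successively_append_iff)
  moreover have "A (last l2) (hd l1)" using cf(3) sp by simp
  ultimately have "successively A (l2 @ l1)" using sp by (simp add: successively_append_iff)
  moreover have "distinct (l2 @ l1)" using cf(1) sp by auto
  moreover have "set (l2 @ l1) = RR" using c sp by auto
  ultimately have h: "hampath (l2 @ l1)" unfolding hampath_def using sp by auto
  have "last (l2 @ l1) = last l1" "hd (l2 @ l1) = hd l2" using sp by auto
  then show ?thesis using from_good[OF h] g by simp
qed

lemma outdeg3:
  assumes BC: "BB = {}" "CC = {}" and x: "x \<in> RR"
  shows "3 \<le> card {y\<in>RR. A x y}"
proof -
  have fin: "finite {y\<in>RR. A x y}" using finRR by auto
  have xV: "x \<in> V" using x RR_sub by auto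
  obtain w where w: "w \<in> {u, v}" "{y\<in>V. A x y} \<subseteq> {y\<in>RR. A x y} \<union> {w}"
  proof (cases "x \<in> PP")
    case True
    have "{y\<in>V. A x y} \<subseteq> {y\<in>RR. A x y} \<union> {v}" using True asym unfolding PP_def RR_def by auto
    then show ?thesis using that by blast
  next
    case False
    then have "x \<in> QQ" using cls[OF x] BC by auto
    then have "{y\<in>V. A x y} \<subseteq> {y\<in>RR. A x y} \<union> {u}" using asym unfolding QQ_def RR_def by auto
    then show ?thesis using that by blast
  qed
  have "od x \<le> card ({y\<in>RR. A x y} \<union> {w})" unfolding out_degree_def using w fin by (intro card_mono) auto
  also have "\<dots> \<le> card {y\<in>RR. A x y} + 1" using card_Un_le[of "{y\<in>RR. A x y}" "{w}"] by simp
  finally show ?thesis using od_lb[OF xV] big by linarith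
qed

end

context uvsetup begin

lemma ham_alt:
  assumes c: "cyc c" "set c = RR" and sF: "successively (\<lambda>a b. \<not> good a b) c"
    and cl: "\<not> good (last c) (hd c)"
  shows HAM
proof -
  have cf: "distinct c" "successively A c" "A (last c) (hd c)" "3 \<le> length c" "c \<noteq> []"
    using c unfolding cyc_def by auto
  have pC: "\<forall>a b. a \<in> set c \<longrightarrow> b \<in> set c \<longrightarrow> \<not> good a b \<longrightarrow> a \<in> CC \<longrightarrow> b \<in> CC"
  proof (intro allI impI)
    fix a b assume "a \<in> set c" "b \<in> set c" "\<not> good a b" "a \<in> CC"
    then show "b \<in> CC" using cls[of b] c unfolding good_def by auto
  qed
  have CCe: "CC = {}"
  proof (rule ccontr)
    assume "CC \<noteq> {}"
    then obtain x where "x \<in> CC" by auto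
    then have "x \<in> set c" using c classes_RR by auto
    then have "set c \<subseteq> CC" using cyc_prop[OF sF cl cf(5) pC] \<open>x \<in> CC\<close> by blast
    then show False using not_RR_CC c by auto
  qed
  let ?S = "CC \<union> PP \<union> QQ"
  have pS: "\<forall>a b. a \<in> set c \<longrightarrow> b \<in> set c \<longrightarrow> \<not> good a b \<longrightarrow> a \<in> ?S \<longrightarrow> b \<in> ?S"
  proof (intro allI impI)
    fix a b assume ab: "a \<in> set c" "b \<in> set c" "\<not> good a b" "a \<in> ?S"
    show "b \<in> ?S"
    proof (rule ccontr)
      assume "b \<notin> ?S"
      then have "b \<in> BB" using cls[of b] ab c by auto
      then show False using ab CCe unfolding good_def by auto
    qed
  qed
  have BBe: "BB = {}"
  proof (cases "\<exists>x\<in>set c. x \<in> ?S")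
    case True
    then obtain x where "x \<in> set c" "x \<in> ?S" by blast
    then have "set c \<subseteq> ?S" using cyc_prop[OF sF cl cf(5) pS] by blast
    then have "BB \<subseteq> ?S" using c classes_RR by auto
    then show ?thesis using BC_disj BP_disj BQ_disj by auto
  next
    case False
    then have "RR \<subseteq> BB" using c cls by auto
    then show ?thesis using not_RR_BB by blast
  qed
  have RPQ: "x \<in> RR \<Longrightarrow> x \<in> PP \<or> x \<in> QQ" for x using cls[of x] BBe CCe by auto
  have alt: "(a \<in> PP \<longrightarrow> b \<in> QQ) \<and> (a \<in> QQ \<longrightarrow> b \<in> PP)" if "a \<in> RR" "b \<in> RR" "\<not> good a b" for a b
    using that RPQ[of b] unfolding good_def by auto
  have o3: "x \<in> RR \<Longrightarrow> 3 \<le> card {y\<in>RR. A x y}" for x using outdeg3[OF BBe CCe] by blast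
  have lenc: "length c = card V - 2" using distinct_card[OF cf(1)] c RR_card by simp
  then have len7: "7 \<le> length c" using big by linarith
  obtain c0 r0 where r0: "c = c0 # r0" using cf(5) by (cases c) auto
  obtain c1 r1 where r1: "r0 = c1 # r1" using len7 r0 by (cases r0) auto
  obtain c2 r2 where r2: "r1 = c2 # r2" using len7 r0 r1 by (cases r1) auto
  obtain c3 zs where r3: "r2 = c3 # zs" using len7 r0 r1 r2 by (cases r2) auto
  have ce: "c = c0 # c1 # c2 # c3 # zs" using r0 r1 r2 r3 by simp
  have zsne: "zs \<noteq> []" using len7 ce by auto
  have inR: "c0 \<in> RR" "c1 \<in> RR" "c2 \<in> RR" "c3 \<in> RR" "set zs \<subseteq> RR" using c ce by auto
  have Vs: "c0 \<in> V" "c1 \<in> V" "c2 \<in> V" "c3 \<in> V" using inR RR_sub by auto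
  have dc: "distinct (c0 # c1 # c2 # c3 # zs)" using cf ce by simp
  have sA: "A c0 c1" "A c1 c2" "A c2 c3" "successively A (c3 # zs)" using cf(2) ce by auto
  have clA: "A (last zs) c0" using cf(3) ce zsne by simp
  have g01: "\<not> good c0 c1" "\<not> good c1 c2" using sF ce by auto
  have same02: "(c0 \<in> PP \<and> c2 \<in> PP) \<or> (c0 \<in> QQ \<and> c2 \<in> QQ)"
    using alt[OF inR(1,2) g01(1)] alt[OF inR(2,3) g01(2)] RPQ[OF inR(1)] by blast
  have A1: "A c1 c3 \<or> HAM"
  proof (cases "A c1 c3")
    case True then show ?thesis by blast
  next
    case False
    then have c31: "A c3 c1" using tot[OF Vs(2,4)] dc by auto
    let ?q = "c2 # c3 # zs @ [c0]"
    have sq: "successively A ?q" using sA clA zsne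
      by (simp add: successively_append_iff successively_Cons)
    have dq: "distinct ?q" using dc by auto
    have setq: "set ?q = RR - {c1}" using c ce dc by auto
    have pq: "is_path V A c2 c0 ?q" unfolding is_path_iff using sq dq setq RR_sub by auto
    have "\<exists>b\<in>set (zs @ [c0]). A c1 b"
    proof (rule ccontr)
      assume nb: "\<not> ?thesis"
      have "{y\<in>RR. A c1 y} \<subseteq> {c2}"
      proof
        fix y assume y: "y \<in> {y\<in>RR. A c1 y}"
        then have "y \<noteq> c1" "y \<noteq> c3" using arcV c31 asym by auto
        then have "y \<in> set ?q" using y setq by auto
        then show "y \<in> {c2}" using y nb \<open>y \<noteq> c3\<close> by auto
      qed
      then have "card {y\<in>RR. A c1 y} \<le> 1" using card_mono[of "{c2}"] by fastforce
      then show False using o3[OF inR(2)] by linarith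
    qed
    then obtain b where b: "b \<in> set (zs @ [c0])" "A c1 b" by blast
    have c1q: "c1 \<notin> set ?q" using setq by auto
    have qsplit: "?q = [c2, c3] @ (zs @ [c0])" by simp
    have ea: "\<exists>a'\<in>set [c2, c3]. A a' c1" using c31 by auto
    have eb: "\<exists>b'\<in>set (zs @ [c0]). A c1 b'" using b by blast
    obtain p' where p': "is_path V A c2 c0 p'" "set p' = insert c1 (set ?q)"
      using path_insert[OF pq Vs(2) c1q qsplit ea eb] by blast
    have "hampath p'" using p' setq inR unfolding hampath_def is_path_iff by auto
    moreover have "hd p' = c2" "last p' = c0" using p' by (auto simp: is_path_iff)
    ultimately show ?thesis using same_class same02 by metis
  qed
  let ?cl = "last zs"
  have A2: "A ?cl c2 \<or> HAM"
  proof (cases "A ?cl c2")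
    case True then show ?thesis by blast
  next
    case False
    have "?cl \<in> set zs" using zsne by simp
    then have clR: "?cl \<in> RR" "?cl \<in> V" using inR RR_sub by auto
    have "?cl \<noteq> c2" using dc \<open>?cl \<in> set zs\<close> by auto
    then have c2l: "A c2 ?cl" using tot[OF Vs(3) clR(2)] False by auto
    let ?q = "butlast c"
    have qe: "?q = [c0, c1, c2] @ (c3 # butlast zs)" using ce zsne by simp
    have cq: "c = ?q @ [?cl]" using ce zsne by simp
    have "successively A (?q @ [?cl])" using cf(2) cq by simp
    then have sq: "successively A ?q" by (simp add: successively_append_iff)
    have dcq: "distinct (?q @ [?cl])" using cf(1) cq by simp
    then have dq: "distinct ?q" by simp
    have clq: "?cl \<notin> set ?q" using dcq by simp
    have "set (?q @ [?cl]) = RR" using c cq by simp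
    then have setq: "set ?q = RR - {?cl}" using clq by auto
    have pq: "is_path V A c0 (last ?q) ?q" unfolding is_path_iff using sq dq setq RR_sub qe by auto
    have "\<exists>b\<in>set (c3 # butlast zs). A ?cl b"
    proof (rule ccontr)
      assume nb: "\<not> ?thesis"
      have "{y\<in>RR. A ?cl y} \<subseteq> {c0, c1}"
      proof
        fix y assume y: "y \<in> {y\<in>RR. A ?cl y}"
        then have "y \<noteq> ?cl" "y \<noteq> c2" using arcV c2l asym by auto
        then have "y \<in> set ?q" using y setq by auto
        then show "y \<in> {c0, c1}" using y nb \<open>y \<noteq> c2\<close> qe by auto
      qed
      then have "card {y\<in>RR. A ?cl y} \<le> card {c0, c1}" by (intro card_mono) auto
      also have "\<dots> \<le> 2" by (simp add: card_insert_if)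
      finally show False using o3[OF clR(1)] by linarith
    qed
    then obtain b where b: "b \<in> set (c3 # butlast zs)" "A ?cl b" by blast
    have "\<exists>a'\<in>set [c0, c1, c2]. A a' ?cl" using c2l by auto
    then obtain p' where p': "is_path V A c0 (last ?q) p'" "set p' = insert ?cl (set ?q)"
      using path_insert[OF pq clR(2) clq qe _] b by blast
    have hp: "hampath p'" using p' setq clR unfolding hampath_def is_path_iff by auto
    have hl: "hd p' = c0" "last p' = last ?q" using p' by (auto simp: is_path_iff)
    have g1: "\<not> good (last ?q) (last c)" using succ_last2[OF sF] len7 by simp
    have g2: "\<not> good (last c) c0" using cl ce by simp
    have qne: "?q \<noteq> []" using qe by simp
    have lR1: "last ?q \<in> RR" using last_in_set[OF qne] setq by blast
    have lR2: "last c \<in> RR" using last_in_set[OF cf(5)] c(2) by blast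
    note lR = lR1 lR2
    have e1: "(last ?q \<in> PP \<longrightarrow> last c \<in> QQ) \<and> (last ?q \<in> QQ \<longrightarrow> last c \<in> PP)"
      using alt[OF lR g1] .
    have e2: "(last c \<in> PP \<longrightarrow> c0 \<in> QQ) \<and> (last c \<in> QQ \<longrightarrow> c0 \<in> PP)"
      using alt[OF lR(2) inR(1) g2] .
    have "last ?q \<in> PP \<or> last ?q \<in> QQ" using RPQ[OF lR(1)] .
    then have "(c0 \<in> PP \<and> last ?q \<in> PP) \<or> (c0 \<in> QQ \<and> last ?q \<in> QQ)" using e1 e2 by blast
    then show ?thesis using same_class[OF hp] hl by simp
  qed
  show HAM
  proof (cases "A c1 c3 \<and> A ?cl c2")
    case False then show ?thesis using A1 A2 by blast
  next
    case True
    let ?l = "c0 # c1 # c3 # zs @ [c2]"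
    have "successively A ?l" using sA True zsne
      by (simp add: successively_append_iff successively_Cons)
    moreover have "distinct ?l" using dc by auto
    moreover have "set ?l = RR" using c ce by auto
    ultimately have "hampath ?l" unfolding hampath_def by auto
    then show ?thesis using same_class same02 by simp
  qed
qed

lemma ham: HAM
proof -
  obtain c where c: "cyc c" "set c = RR" using ham_cycle by blast
  have hc: "hampath c" using c unfolding cyc_def hampath_def by auto
  show ?thesis
  proof (cases "good (last c) (hd c)")
    case True then show ?thesis using from_good[OF hc] by blast
  next
    case cl: False
    show ?thesis
    proof (cases "\<exists>l1 l2. c = l1 @ l2 \<and> l1 \<noteq> [] \<and> l2 \<noteq> [] \<and> good (last l1) (hd l2)")
      case True
      then obtain l1 l2 where "c = l1 @ l2" "l1 \<noteq> []" "l2 \<noteq> []" "good (last l1) (hd l2)" by blast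
      then show ?thesis using ham_split[OF c] by blast
    next
      case False
      then have "successively (\<lambda>a b. \<not> good a b) c" by (intro no_split_succ) blast
      then show ?thesis using ham_alt[OF c _ cl] by blast
    qed
  qed
qed

lemma main1: "\<exists>Ps. weak_container V A 1 u v Ps"
proof -
  obtain p where p: "is_path V A u v p \<or> is_path V A v u p" "set p = V" using ham unfolding HAM_def by blast
  have "weak_container V A 1 u v [p]" unfolding weak_container_def using p by auto
  then show ?thesis by blast
qed

end

lemma wc_sym: "weak_container V A w a b Ps \<Longrightarrow> weak_container V A w b a Ps"
  unfolding weak_container_def by blast

theorem theorem4p3:
  fixes V :: "'a set" and A :: "'a \<Rightarrow> 'a \<Rightarrow> bool" and k t :: nat
  assumes "tournament V A"
    and "t \<ge> 2"
    and "irregularity V A \<le> k"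
    and "card V \<ge> 6 * t + 5 * k - 3"
  shows "\<forall>\<omega>. 1 \<le> \<omega> \<and> \<omega> \<le> t + 1 \<longrightarrow> weakly_connected_star V A \<omega>"
proof (intro allI impI)
  fix w :: nat assume w: "1 \<le> w \<and> w \<le> t + 1"
  have ts: "tsetup V A k" using assms by unfold_locales linarith+
  have dir: "\<exists>Ps. weak_container V A w a b Ps" if ab: "a \<in> V" "b \<in> V" "a \<noteq> b" "A a b" for a b
  proof -
    have us: "uvsetup V A k a b" using ts ab by (simp add: uvsetup_def uvsetup_axioms_def)
    show ?thesis
    proof (cases "w = 1")
      case True then show ?thesis using uvsetup.main1[OF us] by simp
    next
      case False
      have "mainl V A k a b t" using us assms(2,4) by (simp add: mainl_def mainl_axioms_def)
      then show ?thesis using mainl.main_ge2[of V A k a b t w] w False by auto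
    qed
  qed
  show "weakly_connected_star V A w" unfolding weakly_connected_star_def
  proof (intro ballI impI)
    fix a b assume ab: "a \<in> V" "b \<in> V" "a \<noteq> b"
    have "A a b \<or> A b a" using tsetup.tot[OF ts ab] .
    then show "\<exists>Ps. weak_container V A w a b Ps"
    proof
      assume "A a b" then show ?thesis using dir ab by blast
    next
      assume "A b a" then obtain Ps where "weak_container V A w b a Ps" using dir ab by blast
      then show ?thesis using wc_sym[of V A w b a Ps] by blast
    qed
  qed
qed


end
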